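(* Let $F$ and $G$ be $\varphi$-functions and $0<p,q<\infty$. (i) If $G\circ T^{1/p}$ is equivalent to a convex function and $\tilde G\circ\tilde F^{-1}$ is concave, then $L_{F,G}$ is $p$-convex. (ii) If $G\circ T^{1/q}$ is equivalent to a concave function and $\tilde G\circ\tilde F^{-1}$ is convex, then $L_{F,G}$ is $q$-concave.
   Context: A $\varphi$-function is a continuous, strictly increasing function $F:[0,\infty)\to[0,\infty)$ with $F(0)=0$ and $\lim_{t\to\infty}F(t)=\infty$. $T^p$ denotes the function $t\mapsto t^p$. Two $\varphi$-functions $F,G$ are equivalent if for some $c<\infty$, $F(t/c)\le G(t)\le F(ct)$ for all $t\ge0$. For a $\varphi$-function $F$ put $\tilde F(t)=1/F(1/t)$ for $t>0$ and $\tilde F(0)=0$. Functions live on $[0,\infty)$ with Lebesgue measure $\lambda$; $f^*(x)=\sup\{t:\lambda(|f|\ge t)\ge x\}$. Luxemburg functional: $\|f\|_G=\inf\{c>0:\int_0^\infty G(|f(x)|/c)\,dx\le1\}$. Orlicz--Lorentz functional: $\|f\|_{F,G}=\|f^*\circ\tilde F\circ\tilde G^{-1}\|_G$, space $L_{F,G}=\{f:\|f\|_{F,G}<\infty\}$. A space $X$ with functional $\|\cdot\|_X$ is $p$-convex if there is $C<\infty$ with $\|(\sum_{i=1}^n|f_i|^p)^{1/p}\|_X\le C(\sum_{i=1}^n\|f_i\|_X^p)^{1/p}$ for all $n$ and $f_1,\dots,f_n\in X$; it is $q$-concave if there is $C<\infty$ with $\|(\sum_{i=1}^n|f_i|^q)^{1/q}\|_X\ge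 C^{-1}(\sum_{i=1}^n\|f_i\|_X^q)^{1/q}$ for all $n$ and $f_1,\dots,f_n\in X$. *)

theory Defs
  imports "HOL-Analysis.Analysis"
begin

text \<open>phi-functions on [0,infinity) (values outside [0,infinity) are irrelevant).\<close>
definition phi_function :: "(real \<Rightarrow> real) \<Rightarrow> bool" where
  "phi_function F \<longleftrightarrow> continuous_on {0..} F \<and> strict_mono_on {0..} F \<and> F 0 = 0
     \<and> filterlim F at_top at_top"

definition phi_equiv :: "(real \<Rightarrow> real) \<Rightarrow> (real \<Rightarrow> real) \<Rightarrow> bool" where
  "phi_equiv F G \<longleftrightarrow> (\<exists>c>0. \<forall>t\<ge>0. F (t / c) \<le> G t \<and> G t \<le> F (c * t))"

definition phi_tilde :: "(real \<Rightarrow> real) \<Rightarrow> real \<Rightarrow> real" where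
  "phi_tilde F = (\<lambda>t. if t = 0 then 0 else 1 / F (1 / t))"

definition phi_inv :: "(real \<Rightarrow> real) \<Rightarrow> real \<Rightarrow> real" where
  "phi_inv F = inv_into {0..} F"

definition decr_rearr :: "(real \<Rightarrow> real) \<Rightarrow> real \<Rightarrow> ennreal" where
  "decr_rearr f x = Sup (ennreal ` {t. 0 \<le> t \<and>
      ennreal x \<le> emeasure lebesgue {y. 0 \<le> y \<and> t \<le> \<bar>f y\<bar>}})"

definition ext_phi :: "(real \<Rightarrow> real) \<Rightarrow> ennreal \<Rightarrow> ennreal" where
  "ext_phi G u = (if u = \<infinity> then \<infinity> else ennreal (G (enn2real u)))"

text \<open>Luxemburg functional of a nonnegative function on [0,infinity) (inf of empty set = infinity).\<close>
definition luxemburg :: "(real \<Rightarrow> real) \<Rightarrow> (real \<Rightarrow> ennreal) \<Rightarrow> ennreal" where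
  "luxemburg G h = Inf (ennreal ` {c. 0 < c \<and>
      (\<integral>\<^sup>+ x \<in> {0..}. ext_phi G (h x / ennreal c) \<partial>lebesgue) \<le> 1})"

definition OL_norm :: "(real \<Rightarrow> real) \<Rightarrow> (real \<Rightarrow> real) \<Rightarrow> (real \<Rightarrow> real) \<Rightarrow> ennreal" where
  "OL_norm F G f = luxemburg G (\<lambda>x. decr_rearr f (phi_tilde F (phi_inv (phi_tilde G) x)))"

definition OL_space :: "(real \<Rightarrow> real) \<Rightarrow> (real \<Rightarrow> real) \<Rightarrow> (real \<Rightarrow> real) set" where
  "OL_space F G = {f. f \<in> borel_measurable (lebesgue_on {0..}) \<and> OL_norm F G f < \<infinity>}"

definition p_convex :: "(real \<Rightarrow> real) set \<Rightarrow> ((real \<Rightarrow> real) \<Rightarrow> ennreal) \<Rightarrow> real \<Rightarrow> bool" where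
  "p_convex X N p \<longleftrightarrow> (\<exists>C>0. \<forall>(n::nat) (f::nat \<Rightarrow> real \<Rightarrow> real). (\<forall>i<n. f i \<in> X) \<longrightarrow>
      N (\<lambda>x. (\<Sum>i<n. \<bar>f i x\<bar> powr p) powr (1 / p))
        \<le> ennreal (C * (\<Sum>i<n. enn2real (N (f i)) powr p) powr (1 / p)))"

definition q_concave :: "(real \<Rightarrow> real) set \<Rightarrow> ((real \<Rightarrow> real) \<Rightarrow> ennreal) \<Rightarrow> real \<Rightarrow> bool" where
  "q_concave X N q \<longleftrightarrow> (\<exists>C>0. \<forall>(n::nat) (f::nat \<Rightarrow> real \<Rightarrow> real). (\<forall>i<n. f i \<in> X) \<longrightarrow>
      ennreal ((1 / C) * (\<Sum>i<n. enn2real (N (f i)) powr q) powr (1 / q))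
        \<le> N (\<lambda>x. (\<Sum>i<n. \<bar>f i x\<bar> powr q) powr (1 / q)))"

end

theory Submission
  imports Defs
begin


lemma sigma_finite_lebesgue: "sigma_finite_measure (lebesgue :: real measure)"
proof
  show "\<exists>A::real set set. countable A \<and> A \<subseteq> sets lebesgue \<and> \<Union>A = space lebesgue \<and> (\<forall>a\<in>A. emeasure lebesgue a \<noteq> \<infinity>)"
  proof (intro exI[of _ "range (\<lambda>n::nat. {-real n..real n})"] conjI)
    show "\<Union>(range (\<lambda>n::nat. {-real n..real n})) = space lebesgue"
    proof -
      have "x \<in> (\<Union>n. {-real n..real n})" for x :: real
      proof -
        obtain n :: nat where "\<bar>x\<bar> \<le> real n" using real_arch_simple by blast
        then show ?thesis by (intro UN_I[of n]) auto
      qed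
      then show ?thesis by auto
    qed
  qed auto
qed

definition M0 :: "real measure" where "M0 = lebesgue_on {0..}"

lemma space_M0: "space M0 = {0..}" by (simp add: M0_def)

lemma sigma_finite_M0: "sigma_finite_measure M0"
  unfolding M0_def by (rule sigma_finite_measure_restrict_space[OF sigma_finite_lebesgue]) auto

interpretation M0: sigma_finite_measure M0 by (rule sigma_finite_M0)
interpretation M0lb: pair_sigma_finite M0 lborel ..

lemma downset_borel:
  fixes D :: "real set"
  assumes "\<And>x z. x \<in> D \<Longrightarrow> z \<le> x \<Longrightarrow> z \<in> D"
  shows "D \<in> sets borel"
  by (rule real_interval_borel_measurable) (use assms in \<open>auto simp: is_interval_1\<close>)

lemma antimono_borel:
  fixes g :: "real \<Rightarrow> ennreal"
  assumes "antimono g"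
  shows "g \<in> borel_measurable borel"
proof (rule borel_measurableI_greater)
  fix y
  have "{x. y < g x} \<in> sets borel"
    by (rule downset_borel) (use assms in \<open>auto simp: antimono_def intro: less_le_trans\<close>)
  then show "{x \<in> space borel. y < g x} \<in> sets borel" by simp
qed

definition dfun :: "(real \<Rightarrow> ennreal) \<Rightarrow> real \<Rightarrow> ennreal" where
  "dfun u t = emeasure M0 {y \<in> space M0. ennreal t < u y}"

lemma dfun_antimono:
  assumes [measurable]: "u \<in> borel_measurable M0"
  shows "antimono (dfun u)"
  unfolding antimono_def dfun_def
  by (auto intro!: emeasure_mono simp: ennreal_leI dest: le_less_trans[OF ennreal_leI])

lemma ennreal_nat_le_top:
  fixes x :: ennreal
  assumes "\<And>n::nat. ennreal (real n) \<le> x"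
  shows "x = \<infinity>"
proof (cases x)
  case (real r)
  obtain n :: nat where "r < real n" using reals_Archimedean2 by blast
  moreover have "ennreal (real n) \<le> ennreal r" using assms[of n] real by simp
  ultimately show ?thesis using real by (simp add: ennreal_le_iff)
qed simp

lemma emeasure_lborel_Ici_top: "emeasure lborel {0::real..} = \<infinity>"
proof -
  have "ennreal (real n) \<le> emeasure lborel {0::real..}" for n :: nat
    using emeasure_mono[of "{0..real n}" "{0::real..}" lborel] by auto
  then show ?thesis by (rule ennreal_nat_le_top)
qed

lemma emeasure_lborel_below:
  "emeasure lborel {t::real. 0 \<le> t \<and> ennreal t < a} = a"
proof (cases a)
  case (real r)
  then have "{t::real. 0 \<le> t \<and> ennreal t < a} = {0..<r}"
    by (auto simp: ennreal_less_iff)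
  then show ?thesis using real by simp
next
  case top
  then have "{t::real. 0 \<le> t \<and> ennreal t < a} = {0..}" by auto
  then show ?thesis using top emeasure_lborel_Ici_top by (simp add: atLeast_def)
qed

lemma layer_cake:
  assumes [measurable]: "u \<in> borel_measurable M0"
  shows "(\<integral>\<^sup>+y. u y \<partial>M0) = (\<integral>\<^sup>+t. dfun u t * indicator {0..} t \<partial>lborel)"
proof -
  let ?f = "\<lambda>(y,t). indicator {p. 0 \<le> snd p \<and> ennreal (snd p) < u (fst p)} (y,t) :: ennreal"
  have meas[measurable]: "?f \<in> borel_measurable (M0 \<Otimes>\<^sub>M lborel)"
    by measurable
  have "(\<integral>\<^sup>+y. u y \<partial>M0) = (\<integral>\<^sup>+y. (\<integral>\<^sup>+t. ?f (y,t) \<partial>lborel) \<partial>M0)"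
  proof (rule nn_integral_cong)
    fix y
    have "(\<integral>\<^sup>+t. ?f (y,t) \<partial>lborel) = (\<integral>\<^sup>+t. indicator {t. 0 \<le> t \<and> ennreal t < u y} t \<partial>lborel)"
      by (intro nn_integral_cong) (auto simp: indicator_def)
    also have "\<dots> = u y"
      by (subst nn_integral_indicator) (auto simp: emeasure_lborel_below)
    finally show "u y = (\<integral>\<^sup>+t. ?f (y,t) \<partial>lborel)" by simp
  qed
  also have "\<dots> = (\<integral>\<^sup>+t. (\<integral>\<^sup>+y. ?f (y,t) \<partial>M0) \<partial>lborel)"
    using M0lb.Fubini'[of "\<lambda>y t. ?f (y,t)"] by simp
  also have "\<dots> = (\<integral>\<^sup>+t. dfun u t * indicator {0..} t \<partial>lborel)"
  proof (rule nn_integral_cong)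
    fix t :: real
    have "(\<integral>\<^sup>+y. ?f (y,t) \<partial>M0) = (\<integral>\<^sup>+y. indicator {y \<in> space M0. ennreal t < u y} y * indicator {0..} t \<partial>M0)"
      by (intro nn_integral_cong) (auto simp: indicator_def)
    also have "\<dots> = dfun u t * indicator {0..} t"
      by (subst nn_integral_multc) (auto simp: dfun_def)
    finally show "(\<integral>\<^sup>+y. ?f (y,t) \<partial>M0) = dfun u t * indicator {0..} t" .
  qed
  finally show ?thesis .
qed



lemma E1:
  fixes a :: ennreal and t s :: real
  assumes "0 \<le> t" "0 \<le> s"
  shows "(ennreal t < a - ennreal s) \<longleftrightarrow> (ennreal (t+s) < a)"
  using assms by (cases a) (auto simp: ennreal_minus ennreal_less_iff ennreal_plus[symmetric] simp del: ennreal_plus)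

lemma E2:
  fixes a b :: ennreal and s1 s2 :: real
  assumes "0 \<le> s1" "0 \<le> s2"
  shows "(a + b) - ennreal (s1+s2) \<le> (a - ennreal s1) + (b - ennreal s2)"
proof (cases a; cases b)
  fix r ra assume *: "a = ennreal r" "b = ennreal ra" "0 \<le> r" "0 \<le> ra"
  have "ennreal (r-s1) + ennreal (ra - s2) = ennreal (max (r-s1) 0 + max (ra-s2) 0)"
  proof -
    have m: "ennreal x = ennreal (max x 0)" for x :: real
      by (cases "x \<ge> 0") (auto simp: ennreal_neg max_def)
    show ?thesis by (subst ennreal_plus) (auto simp: m[of "r-s1"] m[of "ra-s2"])
  qed
  moreover have "ennreal (r + ra - (s1+s2)) \<le> ennreal (max (r-s1) 0 + max (ra-s2) 0)"
    by (rule ennreal_leI) linarith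
  ultimately show ?thesis using * assms by (simp add: ennreal_minus ennreal_plus[symmetric] del: ennreal_plus)
qed (use assms in auto)

lemma E3:
  fixes a b :: ennreal and s1 s2 :: real
  assumes "0 \<le> s1" "0 \<le> s2"
  shows "min a (ennreal s1) + min b (ennreal s2) \<le> min (a+b) (ennreal (s1+s2))"
  using assms by (cases a; cases b) (auto simp: ennreal_plus[symmetric] min_def top_unique simp del: ennreal_plus)




lemma borel_M0: "f \<in> borel_measurable borel \<Longrightarrow> f \<in> borel_measurable M0"
  unfolding M0_def by (intro measurable_restrict_space1 measurable_completion) simp

definition PhiG :: "(ennreal \<Rightarrow> ennreal) \<Rightarrow> (real \<Rightarrow> ennreal) \<Rightarrow> ennreal" where
  "PhiG g u = (\<integral>\<^sup>+t. g (dfun u t) * indicator {0..} t \<partial>lborel)"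

lemma dfun_borel:
  assumes "u \<in> borel_measurable M0"
  shows "dfun u \<in> borel_measurable borel"
  by (rule antimono_borel[OF dfun_antimono[OF assms]])

lemma mono_dfun_borel:
  fixes g :: "ennreal \<Rightarrow> ennreal"
  assumes "u \<in> borel_measurable M0" "mono g"
  shows "(\<lambda>t. g (dfun u t)) \<in> borel_measurable borel"
proof (rule antimono_borel)
  show "antimono (\<lambda>t. g (dfun u t))"
    using dfun_antimono[OF assms(1)] assms(2) unfolding antimono_def mono_def by blast
qed

lemma dfun_shift:
  assumes [measurable]: "u \<in> borel_measurable M0" and "0 \<le> s" "0 \<le> t"
  shows "dfun (\<lambda>y. u y - ennreal s) t = dfun u (t + s)"
  unfolding dfun_def using E1[OF assms(3,2)] by simp

lemma Kcomp:
  assumes [measurable]: "u \<in> borel_measurable M0" and s: "0 \<le> s"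
  shows "(\<integral>\<^sup>+t. (ennreal r * indicator {0..<s} t + dfun u t * indicator {s..} t) \<partial>lborel)
     = ennreal r * ennreal s + (\<integral>\<^sup>+y. (u y - ennreal s) \<partial>M0)"
proof -
  have db[measurable]: "dfun u \<in> borel_measurable borel" by (rule dfun_borel) simp
  have "(\<integral>\<^sup>+t. (ennreal r * indicator {0..<s} t + dfun u t * indicator {s..} t) \<partial>lborel)
      = (\<integral>\<^sup>+t. ennreal r * indicator {0..<s} t \<partial>lborel) + (\<integral>\<^sup>+t. dfun u t * indicator {s..} t \<partial>lborel)"
    by (rule nn_integral_add) auto
  also have "(\<integral>\<^sup>+t. ennreal r * indicator {0..<s} t \<partial>lborel) = ennreal r * ennreal s"
    using s by (subst nn_integral_cmult_indicator) auto
  also have "(\<integral>\<^sup>+t. dfun u t * indicator {s..} t \<partial>lborel) = (\<integral>\<^sup>+t. dfun u (s + 1 * t) * indicator {s..} (s + 1 * t) \<partial>lborel)"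
    using nn_integral_real_affine[of "\<lambda>t. dfun u t * indicator {s..} t" 1 s] by simp
  also have "\<dots> = (\<integral>\<^sup>+t. dfun (\<lambda>y. u y - ennreal s) t * indicator {0..} t \<partial>lborel)"
    by (intro nn_integral_cong) (auto simp: indicator_def dfun_shift[OF _ s] add.commute)
  also have "\<dots> = (\<integral>\<^sup>+y. (u y - ennreal s) \<partial>M0)"
    by (rule layer_cake[symmetric]) simp
  finally show ?thesis .
qed

lemma Kup:
  assumes [measurable]: "w \<in> borel_measurable M0" and s: "0 \<le> s"
  shows "PhiG (\<lambda>m. min m (ennreal r)) w \<le> ennreal r * ennreal s + (\<integral>\<^sup>+y. (w y - ennreal s) \<partial>M0)"
proof -
  have "PhiG (\<lambda>m. min m (ennreal r)) w \<le> (\<integral>\<^sup>+t. (ennreal r * indicator {0..<s} t + dfun w t * indicator {s..} t) \<partial>lborel)"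
    unfolding PhiG_def
    by (intro nn_integral_mono) (auto simp: indicator_def)
  then show ?thesis using Kcomp[OF assms] by simp
qed

lemma Kexact:
  assumes [measurable]: "w \<in> borel_measurable M0" and r: "0 < r"
    and fin: "PhiG (\<lambda>m. min m (ennreal r)) w \<noteq> \<infinity>"
  shows "\<exists>s\<ge>0. PhiG (\<lambda>m. min m (ennreal r)) w = ennreal r * ennreal s + (\<integral>\<^sup>+y. (w y - ennreal s) \<partial>M0)"
proof -
  define S where "S = {t. 0 \<le> t \<and> dfun w t \<le> ennreal r}"
  have anti: "antimono (dfun w)" by (rule dfun_antimono) simp
  have "S \<noteq> {}"
  proof
    assume "S = {}"
    then have X: "\<And>t. 0 \<le> t \<Longrightarrow> ennreal r < dfun w t" unfolding S_def by (metis (mono_tags) empty_iff mem_Collect_eq not_le)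
    have "PhiG (\<lambda>m. min m (ennreal r)) w = (\<integral>\<^sup>+t. ennreal r * indicator {0..} (t::real) \<partial>lborel)"
      unfolding PhiG_def
    proof (rule nn_integral_cong)
      fix t :: real
      show "min (dfun w t) (ennreal r) * indicator {0..} t = ennreal r * indicator {0..} t"
      proof (cases "0 \<le> t")
        case True with X[OF True] show ?thesis by (simp add: indicator_def min_def not_le[symmetric])
      qed (simp add: indicator_def)
    qed
    also have "\<dots> = \<infinity>" using r by (subst nn_integral_cmult_indicator) (auto simp: emeasure_lborel_Ici_top ennreal_mult_top)
    finally show False using fin by simp
  qed
  have bdd: "bdd_below S" unfolding S_def by (auto intro: bdd_belowI[of _ 0])
  define s where "s = Inf S"
  have s0: "0 \<le> s" unfolding s_def using \<open>S \<noteq> {}\<close> by (intro cInf_greatest) (auto simp: S_def)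
  have below: "ennreal r < dfun w t" if "0 \<le> t" "t < s" for t
  proof (rule ccontr)
    assume "\<not> ennreal r < dfun w t"
    then have "t \<in> S" using that by (auto simp: S_def not_less)
    then have "s \<le> t" unfolding s_def using bdd by (rule cInf_lower)
    then show False using that by simp
  qed
  have above: "dfun w t \<le> ennreal r" if st: "s < t" for t
  proof -
    obtain t' where "t' \<in> S" "t' < t" using cInf_less_iff[OF \<open>S \<noteq> {}\<close> bdd] st s_def by auto
    then have "dfun w t \<le> dfun w t'" using anti by (auto simp: antimono_def)
    then show ?thesis using \<open>t' \<in> S\<close> by (auto simp: S_def)
  qed
  have "PhiG (\<lambda>m. min m (ennreal r)) w = (\<integral>\<^sup>+t. (ennreal r * indicator {0..<s} t + dfun w t * indicator {s..} t) \<partial>lborel)"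
    unfolding PhiG_def
  proof (rule nn_integral_cong_AE)
    show "AE t in lborel. min (dfun w t) (ennreal r) * indicator {0..} t = ennreal r * indicator {0..<s} t + dfun w t * indicator {s..} t"
      using AE_lborel_singleton[of s]
    proof eventually_elim
      case (elim t)
      show ?case
      proof (cases "t < 0")
        case True then show ?thesis using s0 by (auto simp: indicator_def)
      next
        case False
        show ?thesis
        proof (cases "t < s")
          case True then show ?thesis using False below[of t] by (auto simp: indicator_def min_def)
        next
          case False2: False
          then have "s < t" using elim by simp
          then show ?thesis using False above[of t] s0 by (auto simp: indicator_def min_def)
        qed
      qed
    qed
  qed
  then show ?thesis using Kcomp[of w s r] s0 by auto
qed

lemma Ksub:
  assumes [measurable]: "u \<in> borel_measurable M0" "v \<in> borel_measurable M0" and r: "0 \<le> r"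
  shows "PhiG (\<lambda>m. min m (ennreal r)) (\<lambda>y. u y + v y) \<le> PhiG (\<lambda>m. min m (ennreal r)) u + PhiG (\<lambda>m. min m (ennreal r)) v"
proof (cases "r = 0")
  case True
  then show ?thesis by (simp add: PhiG_def)
next
  case False
  then have r: "0 < r" using r by simp
  show ?thesis
  proof (cases "PhiG (\<lambda>m. min m (ennreal r)) u = \<infinity> \<or> PhiG (\<lambda>m. min m (ennreal r)) v = \<infinity>")
    case True then show ?thesis by auto
  next
    case False
    obtain s1 where s1: "0 \<le> s1" "PhiG (\<lambda>m. min m (ennreal r)) u = ennreal r * ennreal s1 + (\<integral>\<^sup>+y. (u y - ennreal s1) \<partial>M0)"
      using Kexact[of u r] r False by auto
    obtain s2 where s2: "0 \<le> s2" "PhiG (\<lambda>m. min m (ennreal r)) v = ennreal r * ennreal s2 + (\<integral>\<^sup>+y. (v y - ennreal s2) \<partial>M0)"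
      using Kexact[of v r] r False by auto
    have "PhiG (\<lambda>m. min m (ennreal r)) (\<lambda>y. u y + v y) \<le> ennreal r * ennreal (s1+s2) + (\<integral>\<^sup>+y. (u y + v y - ennreal (s1+s2)) \<partial>M0)"
      using s1 s2 by (intro Kup) auto
    also have "(\<integral>\<^sup>+y. (u y + v y - ennreal (s1+s2)) \<partial>M0) \<le> (\<integral>\<^sup>+y. ((u y - ennreal s1) + (v y - ennreal s2)) \<partial>M0)"
      by (intro nn_integral_mono E2) (use s1 s2 in auto)
    also have "\<dots> = (\<integral>\<^sup>+y. (u y - ennreal s1) \<partial>M0) + (\<integral>\<^sup>+y. (v y - ennreal s2) \<partial>M0)"
      by (rule nn_integral_add) auto
    also have "ennreal r * ennreal (s1+s2) = ennreal r * ennreal s1 + ennreal r * ennreal s2"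
      using s1 s2 by (simp add: distrib_left ennreal_plus)
    finally show ?thesis using s1 s2 by (simp add: ac_simps add_mono)
  qed
qed



lemma Lmin:
  assumes [measurable]: "u \<in> borel_measurable M0" and s: "0 \<le> s"
  shows "(\<integral>\<^sup>+y. min (u y) (ennreal s) \<partial>M0) = (\<integral>\<^sup>+t. dfun u t * indicator {0..<s} t \<partial>lborel)"
proof -
  have "(\<integral>\<^sup>+y. min (u y) (ennreal s) \<partial>M0) = (\<integral>\<^sup>+t. dfun (\<lambda>y. min (u y) (ennreal s)) t * indicator {0..} t \<partial>lborel)"
    by (rule layer_cake) simp
  also have "\<dots> = (\<integral>\<^sup>+t. dfun u t * indicator {0..<s} t \<partial>lborel)"
  proof (rule nn_integral_cong)
    fix t :: real
    show "dfun (\<lambda>y. min (u y) (ennreal s)) t * indicator {0..} t = dfun u t * indicator {0..<s} t"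
    proof (cases "0 \<le> t \<and> t < s")
      case True
      then have "{y \<in> space M0. ennreal t < min (u y) (ennreal s)} = {y \<in> space M0. ennreal t < u y}"
        by (auto simp: ennreal_less_iff)
      then show ?thesis using True by (simp add: dfun_def indicator_def)
    next
      case False
      show ?thesis
      proof (cases "0 \<le> t")
        case True
        then have "s \<le> t" using False by simp
        then have se: "{y \<in> space M0. ennreal t < min (u y) (ennreal s)} = {}"
          by (auto simp: min_less_iff_disj ennreal_less_iff dest: ennreal_leI)
        have "dfun (\<lambda>y. min (u y) (ennreal s)) t = 0" unfolding dfun_def by (subst se) simp
        then show ?thesis using False by (simp add: indicator_def)
      qed (simp add: indicator_def)
    qed
  qed
  finally show ?thesis .
qed

lemma Lup:
  assumes [measurable]: "u \<in> borel_measurable M0" and s: "0 \<le> s"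
  shows "(\<integral>\<^sup>+y. min (u y) (ennreal s) \<partial>M0) \<le> PhiG (\<lambda>m. m - ennreal r) u + ennreal r * ennreal s"
proof -
  have db[measurable]: "dfun u \<in> borel_measurable borel" by (rule dfun_borel) simp
  have "(\<integral>\<^sup>+y. min (u y) (ennreal s) \<partial>M0) = (\<integral>\<^sup>+t. dfun u t * indicator {0..<s} t \<partial>lborel)"
    by (rule Lmin) (use s in auto)
  also have "\<dots> \<le> (\<integral>\<^sup>+t. ((dfun u t - ennreal r) * indicator {0..} t + ennreal r * indicator {0..<s} t) \<partial>lborel)"
  proof (rule nn_integral_mono)
    fix t :: real
    have "dfun u t \<le> (dfun u t - ennreal r) + ennreal r"
      by (cases "ennreal r \<le> dfun u t") (auto simp: diff_add_self_ennreal)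
    then show "dfun u t * indicator {0..<s} t \<le> (dfun u t - ennreal r) * indicator {0..} t + ennreal r * indicator {0..<s} t"
      by (auto simp: indicator_def)
  qed
  also have "\<dots> = (\<integral>\<^sup>+t. (dfun u t - ennreal r) * indicator {0..} t \<partial>lborel) + (\<integral>\<^sup>+t. ennreal r * indicator {0..<s} t \<partial>lborel)"
    by (rule nn_integral_add) auto
  also have "(\<integral>\<^sup>+t. ennreal r * indicator {0..<s} t \<partial>lborel) = ennreal r * ennreal s"
    using s by (subst nn_integral_cmult_indicator) auto
  finally show ?thesis by (simp add: PhiG_def)
qed

lemma Lthresh:
  assumes [measurable]: "u \<in> borel_measurable M0" and r: "0 \<le> r"
  obtains sq :: "nat \<Rightarrow> real" where "incseq sq" "\<And>n. 0 \<le> sq n"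
    "\<And>n t. 0 \<le> t \<Longrightarrow> t < sq n \<Longrightarrow> ennreal r < dfun u t"
    "PhiG (\<lambda>m. m - ennreal r) u = (SUP n. \<integral>\<^sup>+t. (dfun u t - ennreal r) * indicator {0..<sq n} t \<partial>lborel)"
proof -
  have db[measurable]: "dfun u \<in> borel_measurable borel" by (rule dfun_borel) simp
  have anti: "antimono (dfun u)" by (rule dfun_antimono) simp
  define S where "S = {t. 0 \<le> t \<and> dfun u t \<le> ennreal r}"
  have mc: "PhiG (\<lambda>m. m - ennreal r) u = (SUP n. \<integral>\<^sup>+t. (dfun u t - ennreal r) * indicator {0..<sq n} t \<partial>lborel)"
    if inc: "incseq sq" and cover: "AE t in lborel. (dfun u t - ennreal r) * indicator {0..} t = (SUP n. (dfun u t - ennreal r) * indicator {0..<sq n} t)"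
    for sq :: "nat \<Rightarrow> real"
  proof -
    have "PhiG (\<lambda>m. m - ennreal r) u = (\<integral>\<^sup>+t. (SUP n. (dfun u t - ennreal r) * indicator {0..<sq n} t) \<partial>lborel)"
      unfolding PhiG_def by (rule nn_integral_cong_AE) (rule cover)
    also have "\<dots> = (SUP n. \<integral>\<^sup>+t. (dfun u t - ennreal r) * indicator {0..<sq n} t \<partial>lborel)"
    proof (rule nn_integral_monotone_convergence_SUP)
      show "incseq (\<lambda>n t. (dfun u t - ennreal r) * indicator {0..<sq n} t)"
        unfolding incseq_def le_fun_def
      proof (intro allI impI)
        fix m n :: nat and t :: real assume "m \<le> n"
        then have "sq m \<le> sq n" using inc by (auto simp: incseq_def)
        then show "(dfun u t - ennreal r) * indicator {0..<sq m} t \<le> (dfun u t - ennreal r) * indicator {0..<sq n} t"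
          by (auto simp: indicator_def)
      qed
    qed auto
    finally show ?thesis .
  qed
  show ?thesis
  proof (cases "S = {}")
    case True
    then have X: "ennreal r < dfun u t" if "0 \<le> t" for t
      using that unfolding S_def by (metis (mono_tags) empty_iff mem_Collect_eq not_le)
    show ?thesis
    proof (rule that[of "\<lambda>n. real n"])
      show "incseq (\<lambda>n. real n)" by (auto simp: incseq_def)
      show "PhiG (\<lambda>m. m - ennreal r) u = (SUP n. \<integral>\<^sup>+t. (dfun u t - ennreal r) * indicator {0..<real n} t \<partial>lborel)"
      proof (rule mc)
        show "incseq (\<lambda>n. real n)" by (auto simp: incseq_def)
        show "AE t in lborel. (dfun u t - ennreal r) * indicator {0..} t = (SUP n. (dfun u t - ennreal r) * indicator {0..<real n} t)"
        proof (rule AE_I2)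
          fix t :: real
          show "(dfun u t - ennreal r) * indicator {0..} t = (SUP n. (dfun u t - ennreal r) * indicator {0..<real n} t)"
          proof (cases "0 \<le> t")
            case True
            obtain N :: nat where N: "t < real N" using reals_Archimedean2 by blast
            show ?thesis
            proof (rule antisym)
              show "(dfun u t - ennreal r) * indicator {0..} t \<le> (SUP n. (dfun u t - ennreal r) * indicator {0..<real n} t)"
                using N True by (intro SUP_upper2[of N]) (auto simp: indicator_def)
              show "(SUP n. (dfun u t - ennreal r) * indicator {0..<real n} t) \<le> (dfun u t - ennreal r) * indicator {0..} t"
                by (intro SUP_least) (auto simp: indicator_def)
            qed
          qed (simp add: indicator_def)
        qed
      qed
    qed (use X in auto)
  next
    case False
    have bdd: "bdd_below S" unfolding S_def by (auto intro: bdd_belowI[of _ 0])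
    define s where "s = Inf S"
    have s0: "0 \<le> s" unfolding s_def using False by (intro cInf_greatest) (auto simp: S_def)
    have below: "ennreal r < dfun u t" if "0 \<le> t" "t < s" for t
    proof (rule ccontr)
      assume "\<not> ennreal r < dfun u t"
      then have "t \<in> S" using that by (auto simp: S_def not_less)
      then have "s \<le> t" unfolding s_def using bdd by (rule cInf_lower)
      then show False using that by simp
    qed
    have above: "dfun u t \<le> ennreal r" if st: "s < t" for t
    proof -
      obtain t' where "t' \<in> S" "t' < t" using cInf_less_iff[OF False bdd] st s_def by auto
      then have "dfun u t \<le> dfun u t'" using anti by (auto simp: antimono_def)
      then show ?thesis using \<open>t' \<in> S\<close> by (auto simp: S_def)
    qed
    define sq where "sq n = s - s / (real n + 1)" for n :: nat
    have sq_le: "sq n \<le> s" for n using s0 by (simp add: sq_def)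
    have sq0: "0 \<le> sq n" for n using s0 by (simp add: sq_def field_simps)
    have inc: "incseq sq"
    proof (rule incseq_SucI)
      fix n
      have "s / (real (Suc n) + 1) \<le> s / (real n + 1)" using s0 by (intro divide_left_mono) auto
      then show "sq n \<le> sq (Suc n)" by (simp add: sq_def)
    qed
    have reach: "\<exists>n. t < sq n" if "0 \<le> t" "t < s" for t
    proof -
      have "0 < s - t" using that by simp
      then obtain N :: nat where N: "s / (s - t) < real N" using reals_Archimedean2 by blast
      have "s < real N * (s - t)" using N \<open>0 < s - t\<close> by (simp add: field_simps)
      also have "\<dots> \<le> (real N + 1) * (s - t)" using \<open>0 < s - t\<close> by (intro mult_right_mono) auto
      finally have "s / (real N + 1) < s - t" by (simp add: field_simps)
      then show ?thesis by (intro exI[of _ N]) (simp add: sq_def)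
    qed
    show ?thesis
    proof (rule that[of sq])
      show "incseq sq" by (rule inc)
      show "0 \<le> sq n" for n by (rule sq0)
      show "ennreal r < dfun u t" if "0 \<le> t" "t < sq n" for n t
        using below[of t] that sq_le[of n] by simp
      show "PhiG (\<lambda>m. m - ennreal r) u = (SUP n. \<integral>\<^sup>+t. (dfun u t - ennreal r) * indicator {0..<sq n} t \<partial>lborel)"
      proof (rule mc[OF inc])
        show "AE t in lborel. (dfun u t - ennreal r) * indicator {0..} t = (SUP n. (dfun u t - ennreal r) * indicator {0..<sq n} t)"
          using AE_lborel_singleton[of s]
        proof eventually_elim
          case (elim t)
          show ?case
          proof (cases "0 \<le> t")
            case False then show ?thesis by (simp add: indicator_def)
          next
            case True
            show ?thesis
            proof (cases "t < s")
              case True2: True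
              obtain N where N: "t < sq N" using reach[OF True True2] by blast
              show ?thesis
              proof (rule antisym)
                show "(dfun u t - ennreal r) * indicator {0..} t \<le> (SUP n. (dfun u t - ennreal r) * indicator {0..<sq n} t)"
                  using N True by (intro SUP_upper2[of N]) (auto simp: indicator_def)
                show "(SUP n. (dfun u t - ennreal r) * indicator {0..<sq n} t) \<le> (dfun u t - ennreal r) * indicator {0..} t"
                  by (intro SUP_least) (auto simp: indicator_def)
              qed
            next
              case False
              then have "s < t" using elim by simp
              then have le: "dfun u t \<le> ennreal r" using above[of t] by simp
              then have "dfun u t < top" by (meson ennreal_less_top le_less_trans)
              then have "dfun u t - ennreal r = 0" using le by (simp add: diff_eq_0_iff_ennreal)
              then show ?thesis by simp
            qed
          qed
        qed
      qed
    qed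
  qed
qed

lemma Lsup:
  assumes [measurable]: "u \<in> borel_measurable M0" "v \<in> borel_measurable M0" and r: "0 \<le> r"
  shows "PhiG (\<lambda>m. m - ennreal r) u + PhiG (\<lambda>m. m - ennreal r) v \<le> PhiG (\<lambda>m. m - ennreal r) (\<lambda>y. u y + v y)"
proof -
  obtain su where su: "incseq su" "\<And>n. 0 \<le> su n" "\<And>n t. 0 \<le> t \<Longrightarrow> t < su n \<Longrightarrow> ennreal r < dfun u t"
    "PhiG (\<lambda>m. m - ennreal r) u = (SUP n. \<integral>\<^sup>+t. (dfun u t - ennreal r) * indicator {0..<su n} t \<partial>lborel)"
    using Lthresh[of u r] r by auto
  obtain sv where sv: "incseq sv" "\<And>n. 0 \<le> sv n" "\<And>n t. 0 \<le> t \<Longrightarrow> t < sv n \<Longrightarrow> ennreal r < dfun v t"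
    "PhiG (\<lambda>m. m - ennreal r) v = (SUP n. \<integral>\<^sup>+t. (dfun v t - ennreal r) * indicator {0..<sv n} t \<partial>lborel)"
    using Lthresh[of v r] r by auto
  define X where "X (w :: real \<Rightarrow> ennreal) (s :: nat \<Rightarrow> real) n = (\<integral>\<^sup>+t. (dfun w t - ennreal r) * indicator {0..<s n} t \<partial>lborel)" for w s n
  have exact: "(\<integral>\<^sup>+y. min (w y) (ennreal (s n)) \<partial>M0) = X w s n + ennreal r * ennreal (s n)"
    if [measurable]: "w \<in> borel_measurable M0" and s0: "0 \<le> s n"
      and gt: "\<And>t. 0 \<le> t \<Longrightarrow> t < s n \<Longrightarrow> ennreal r < dfun w t" for w s n
  proof -
    have db[measurable]: "dfun w \<in> borel_measurable borel" by (rule dfun_borel) simp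
    have "(\<integral>\<^sup>+y. min (w y) (ennreal (s n)) \<partial>M0) = (\<integral>\<^sup>+t. dfun w t * indicator {0..<s n} t \<partial>lborel)"
      by (rule Lmin) (use s0 in auto)
    also have "\<dots> = (\<integral>\<^sup>+t. ((dfun w t - ennreal r) * indicator {0..<s n} t + ennreal r * indicator {0..<s n} t) \<partial>lborel)"
    proof (rule nn_integral_cong)
      fix t :: real
      show "dfun w t * indicator {0..<s n} t = (dfun w t - ennreal r) * indicator {0..<s n} t + ennreal r * indicator {0..<s n} t"
      proof (cases "0 \<le> t \<and> t < s n")
        case True
        then have "ennreal r \<le> dfun w t" using gt[of t] by simp
        then show ?thesis using True by (simp add: indicator_def diff_add_self_ennreal)
      qed (auto simp: indicator_def)
    qed
    also have "\<dots> = X w s n + (\<integral>\<^sup>+t. ennreal r * indicator {0..<s n} t \<partial>lborel)"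
      unfolding X_def by (rule nn_integral_add) auto
    also have "(\<integral>\<^sup>+t. ennreal r * indicator {0..<s n} t \<partial>lborel) = ennreal r * ennreal (s n)"
      using s0 by (subst nn_integral_cmult_indicator) auto
    finally show ?thesis .
  qed
  have step: "X u su n + X v sv n \<le> PhiG (\<lambda>m. m - ennreal r) (\<lambda>y. u y + v y)" for n
  proof -
    have "X u su n + X v sv n + ennreal r * ennreal (su n + sv n)
        = (\<integral>\<^sup>+y. min (u y) (ennreal (su n)) \<partial>M0) + (\<integral>\<^sup>+y. min (v y) (ennreal (sv n)) \<partial>M0)"
    proof -
      have "ennreal r * ennreal (su n + sv n) = ennreal r * ennreal (su n) + ennreal r * ennreal (sv n)"
        using su(2)[of n] sv(2)[of n] by (simp add: ennreal_plus distrib_left)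
      then show ?thesis using exact[of u su n] exact[of v sv n] su sv by (simp add: ac_simps)
    qed
    also have "\<dots> = (\<integral>\<^sup>+y. (min (u y) (ennreal (su n)) + min (v y) (ennreal (sv n))) \<partial>M0)"
      by (rule nn_integral_add[symmetric]) auto
    also have "\<dots> \<le> (\<integral>\<^sup>+y. min (u y + v y) (ennreal (su n + sv n)) \<partial>M0)"
      by (intro nn_integral_mono E3) (use su sv in auto)
    also have "\<dots> \<le> PhiG (\<lambda>m. m - ennreal r) (\<lambda>y. u y + v y) + ennreal r * ennreal (su n + sv n)"
      by (rule Lup) (use su sv in auto)
    finally have "ennreal r * ennreal (su n + sv n) + (X u su n + X v sv n)
        \<le> ennreal r * ennreal (su n + sv n) + PhiG (\<lambda>m. m - ennreal r) (\<lambda>y. u y + v y)"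
      by (simp add: ac_simps)
    then show ?thesis
      by (simp add: ennreal_add_left_cancel_le ennreal_mult_eq_top_iff)
  qed
  have incX: "incseq (X w s)" if "incseq s" for w s
    unfolding X_def incseq_def
  proof (intro allI impI nn_integral_mono)
    fix m n :: nat and t :: real assume "m \<le> n"
    then have "s m \<le> s n" using that by (auto simp: incseq_def)
    then show "(dfun w t - ennreal r) * indicator {0..<s m} t \<le> (dfun w t - ennreal r) * indicator {0..<s n} t"
      by (auto simp: indicator_def)
  qed
  have "PhiG (\<lambda>m. m - ennreal r) u + PhiG (\<lambda>m. m - ennreal r) v = (SUP n. X u su n + X v sv n)"
    using su(4) sv(4) ennreal_SUP_add[OF incX[OF su(1)] incX[OF sv(1)], of u v] by (simp add: X_def)
  also have "\<dots> \<le> PhiG (\<lambda>m. m - ennreal r) (\<lambda>y. u y + v y)"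
    by (intro SUP_least step)
  finally show ?thesis .
qed




definition dk :: "(real \<Rightarrow> real) \<Rightarrow> real \<Rightarrow> nat \<Rightarrow> nat \<Rightarrow> real" where
  "dk \<phi> h N k = (if 1 \<le> k \<and> k \<le> N then (\<phi> (real k * h) - \<phi> (real (k - 1) * h)) / h else 0)"

lemma dk_0[simp]: "dk \<phi> h N 0 = 0" by (simp add: dk_def)
lemma dk_big: "N < k \<Longrightarrow> dk \<phi> h N k = 0" by (simp add: dk_def)

lemma dk_nonneg:
  assumes "mono_on {0..} \<phi>" "0 < h"
  shows "0 \<le> dk \<phi> h N k"
proof -
  have "\<phi> (real (k - 1) * h) \<le> \<phi> (real k * h)" if "1 \<le> k"
    using assms that by (intro mono_onD[OF assms(1)]) (auto intro!: mult_right_mono)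
  then show ?thesis using assms by (auto simp: dk_def)
qed

lemma dk_step:
  assumes "0 < h" "k \<le> N"
  shows "\<phi> (real (k - 1) * h) + dk \<phi> h N k * h = \<phi> (real k * h)"
  using assms by (cases k) (auto simp: dk_def)

lemma chord_cave:
  assumes conc: "concave_on {0..} \<phi>" and mono: "mono_on {0..} \<phi>" and h: "0 < h"
    and k: "1 \<le> k" and m: "real (k - 1) * h \<le> m" "m \<le> real k * h"
  shows "\<phi> (real (k - 1) * h) + dk \<phi> h N k * (m - real (k - 1) * h) \<le> \<phi> m"
proof (cases "k \<le> N")
  case True
  have rk: "real (k - 1) = real k - 1" using k by simp
  have c: "concave_on {real (k - 1) * h..real k * h} \<phi>"
    unfolding concave_on_def by (rule convex_on_subset[OF conc[unfolded concave_on_def]]) (use h in auto)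
  from concave_onD_Icc'[OF c, of m] m
  have "(\<phi> (real k * h) - \<phi> (real (k - 1) * h)) / (real k * h - real (k - 1) * h) * (m - real (k - 1) * h) + \<phi> (real (k - 1) * h) \<le> \<phi> m"
    by auto
  moreover have "real k * h - real (k - 1) * h = h" using rk by (simp add: algebra_simps)
  ultimately show ?thesis using True k by (simp add: dk_def)
next
  case False
  then have "dk \<phi> h N k = 0" by (simp add: dk_def)
  moreover have "\<phi> (real (k - 1) * h) \<le> \<phi> m"
  proof -
    have z: "0 \<le> real (k - 1) * h" using h by simp
    have m0: "0 \<le> m" using z m by linarith
    show ?thesis by (rule mono_onD[OF mono]) (use m h z m0 in auto)
  qed
  ultimately show ?thesis by simp
qed


lemma midpoint_cave:
  fixes \<phi> :: "real \<Rightarrow> real" and x h :: real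
  assumes conc: "concave_on {0..} \<phi>" and x: "0 \<le> x" and h: "0 \<le> h"
  shows "\<phi> (x + 2 * h) - \<phi> (x + h) \<le> \<phi> (x + h) - \<phi> x"
proof -
  have "(1 - 1/2) * \<phi> x + 1/2 * \<phi> (x + 2*h) \<le> \<phi> ((1 - 1/2) *\<^sub>R x + (1/2) *\<^sub>R (x + 2*h))"
    by (rule concave_onD[OF conc]) (use x h in auto)
  moreover have "(1 - 1/2) *\<^sub>R x + (1/2::real) *\<^sub>R (x + 2*h) = x + h" by (simp add: field_simps)
  ultimately show ?thesis by simp
qed

lemma midpoint_vex:
  fixes \<phi> :: "real \<Rightarrow> real" and x h :: real
  assumes conv: "convex_on {0..} \<phi>" and x: "0 \<le> x" and h: "0 \<le> h"
  shows "\<phi> (x + h) - \<phi> x \<le> \<phi> (x + 2 * h) - \<phi> (x + h)"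
proof -
  have "\<phi> ((1 - 1/2) *\<^sub>R x + (1/2) *\<^sub>R (x + 2*h)) \<le> (1 - 1/2) * \<phi> x + 1/2 * \<phi> (x + 2*h)"
    by (rule convex_onD[OF conv]) (use x h in auto)
  moreover have "(1 - 1/2) *\<^sub>R x + (1/2::real) *\<^sub>R (x + 2*h) = x + h" by (simp add: field_simps)
  ultimately show ?thesis by simp
qed

lemma dk_dec:
  assumes conc: "concave_on {0..} \<phi>" and mono: "mono_on {0..} \<phi>" and h: "0 < h" and k: "1 \<le> k"
  shows "dk \<phi> h N (Suc k) \<le> dk \<phi> h N k"
proof (cases "Suc k \<le> N")
  case True
  have "\<phi> (real (k - 1) * h + 2 * h) - \<phi> (real (k - 1) * h + h) \<le> \<phi> (real (k - 1) * h + h) - \<phi> (real (k - 1) * h)"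
    by (rule midpoint_cave[OF conc]) (use h in auto)
  moreover have "real (k - 1) * h + h = real k * h" "real (k - 1) * h + 2 * h = real (Suc k) * h"
    using k by (auto simp: algebra_simps of_nat_diff)
  ultimately have "\<phi> (real (Suc k) * h) - \<phi> (real k * h) \<le> \<phi> (real k * h) - \<phi> (real (k - 1) * h)" by simp
  then show ?thesis using True k h by (simp add: dk_def divide_right_mono)
next
  case False
  then have "dk \<phi> h N (Suc k) = 0" by (simp add: dk_def)
  then show ?thesis using dk_nonneg[OF mono h] by simp
qed

definition Gc :: "(real \<Rightarrow> real) \<Rightarrow> real \<Rightarrow> nat \<Rightarrow> nat \<Rightarrow> real \<Rightarrow> real" where
  "Gc \<phi> h N j m = dk \<phi> h N 1 * m + (\<Sum>k\<in>{1..j}. (dk \<phi> h N (Suc k) - dk \<phi> h N k) * max (m - real k * h) 0)"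

lemma Gc_Suc: "Gc \<phi> h N (Suc j) m = Gc \<phi> h N j m + (dk \<phi> h N (Suc (Suc j)) - dk \<phi> h N (Suc j)) * max (m - real (Suc j) * h) 0"
  by (simp add: Gc_def)

lemma Gc_props:
  assumes conc: "concave_on {0..} \<phi>" and mono: "mono_on {0..} \<phi>" and h: "0 < h" and phi0: "\<phi> 0 = 0"
  shows "j \<le> N \<Longrightarrow> (\<forall>m. 0 \<le> m \<longrightarrow> m \<le> real (Suc j) * h \<longrightarrow> Gc \<phi> h N j m \<le> \<phi> m)
     \<and> (\<forall>m. real j * h \<le> m \<longrightarrow> Gc \<phi> h N j m = \<phi> (real j * h) + dk \<phi> h N (Suc j) * (m - real j * h))
     \<and> (\<forall>m. 0 \<le> m \<longrightarrow> m \<le> real (Suc j) * h \<longrightarrow> \<phi> (max (m - h) 0) \<le> Gc \<phi> h N j m)"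
proof (induction j)
  case 0
  have "Gc \<phi> h N 0 m = dk \<phi> h N 1 * m" for m by (simp add: Gc_def)
  moreover have "dk \<phi> h N 1 * m \<le> \<phi> m" if "0 \<le> m" "m \<le> h" for m
    using chord_cave[OF conc mono h, of 1 m N] that phi0 by simp
  moreover have "\<phi> (max (m - h) 0) = 0" if "m \<le> h" for m using that phi0 by (simp add: max_def)
  moreover have "0 \<le> dk \<phi> h N 1" by (rule dk_nonneg[OF mono h])
  ultimately show ?case using phi0 by auto
next
  case (Suc j)
  then have IH: "\<forall>m. 0 \<le> m \<longrightarrow> m \<le> real (Suc j) * h \<longrightarrow> Gc \<phi> h N j m \<le> \<phi> m"
     "\<forall>m. real j * h \<le> m \<longrightarrow> Gc \<phi> h N j m = \<phi> (real j * h) + dk \<phi> h N (Suc j) * (m - real j * h)"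
     "\<forall>m. 0 \<le> m \<longrightarrow> m \<le> real (Suc j) * h \<longrightarrow> \<phi> (max (m - h) 0) \<le> Gc \<phi> h N j m"
    and jN: "Suc j \<le> N" by auto
  have exact: "Gc \<phi> h N (Suc j) m = \<phi> (real (Suc j) * h) + dk \<phi> h N (Suc (Suc j)) * (m - real (Suc j) * h)"
    if "real (Suc j) * h \<le> m" for m
  proof -
    have "real j * h \<le> m" using that h by (simp add: algebra_simps)
    then have "Gc \<phi> h N (Suc j) m = \<phi> (real j * h) + dk \<phi> h N (Suc j) * (m - real j * h)
        + (dk \<phi> h N (Suc (Suc j)) - dk \<phi> h N (Suc j)) * (m - real (Suc j) * h)"
      using IH(2) that by (simp add: Gc_Suc max_def)
    also have "\<phi> (real j * h) = \<phi> (real (Suc j) * h) - dk \<phi> h N (Suc j) * h"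
      using dk_step[OF h jN, of \<phi>] by simp
    finally show ?thesis by (simp add: algebra_simps)
  qed
  have below: "Gc \<phi> h N (Suc j) m = Gc \<phi> h N j m" if "m \<le> real (Suc j) * h" for m
    using that by (simp add: Gc_Suc max_def)
  have p1: "Gc \<phi> h N (Suc j) m \<le> \<phi> m" if "0 \<le> m" "m \<le> real (Suc (Suc j)) * h" for m
  proof (cases "m \<le> real (Suc j) * h")
    case True then show ?thesis using below IH(1) that by auto
  next
    case False
    then have "Gc \<phi> h N (Suc j) m = \<phi> (real (Suc j) * h) + dk \<phi> h N (Suc (Suc j)) * (m - real (Suc j) * h)"
      using exact by simp
    also have "\<dots> \<le> \<phi> m"
      using chord_cave[OF conc mono h, of "Suc (Suc j)" m N] that False by simp
    finally show ?thesis .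
  qed
  have p3: "\<phi> (max (m - h) 0) \<le> Gc \<phi> h N (Suc j) m" if "0 \<le> m" "m \<le> real (Suc (Suc j)) * h" for m
  proof (cases "m \<le> real (Suc j) * h")
    case True then show ?thesis using below IH(3) that by auto
  next
    case False
    have "\<phi> (max (m - h) 0) \<le> \<phi> (real (Suc j) * h)"
      using that h by (intro mono_onD[OF mono]) (auto simp: algebra_simps)
    also have "\<dots> \<le> \<phi> (real (Suc j) * h) + dk \<phi> h N (Suc (Suc j)) * (m - real (Suc j) * h)"
      using dk_nonneg[OF mono h] False by simp
    finally show ?thesis using exact False by simp
  qed
  show ?case using p1 p3 exact by auto
qed

lemma Gc_le:
  assumes conc: "concave_on {0..} \<phi>" and mono: "mono_on {0..} \<phi>" and h: "0 < h" and phi0: "\<phi> 0 = 0"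
    and m: "0 \<le> m"
  shows "Gc \<phi> h N N m \<le> \<phi> m"
proof (cases "m \<le> real (Suc N) * h")
  case True then show ?thesis using Gc_props[OF assms(1-4), where j=N and N=N] m by auto
next
  case False
  then have Nm: "real N * h \<le> m" using h by (simp add: algebra_simps)
  then have "Gc \<phi> h N N m = \<phi> (real N * h)"
    using Gc_props[OF assms(1-4), where j=N and N=N] h by (auto simp: dk_big)
  also have "\<dots> \<le> \<phi> m" by (rule mono_onD[OF mono]) (use Nm h m in auto)
  finally show ?thesis .
qed


lemma secant_vex:
  assumes conv: "convex_on {0..} \<phi>" and h: "0 < h" and k: "1 \<le> k" "k \<le> N"
    and m: "real k * h \<le> m"
  shows "\<phi> (real k * h) + dk \<phi> h N k * (m - real k * h) \<le> \<phi> m"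
proof (cases "m = real k * h")
  case True then show ?thesis by simp
next
  case False
  then have mk: "real k * h < m" using m by simp
  have rk: "real (k - 1) * h = real k * h - h" using k by (simp add: of_nat_diff algebra_simps)
  have x0: "0 \<le> real (k - 1) * h" using h by simp
  have xt: "real (k - 1) * h < real k * h" using rk h by simp
  have sl: "(\<phi> (real (k - 1) * h) - \<phi> (real k * h)) / (real (k - 1) * h - real k * h)
      \<le> (\<phi> (real k * h) - \<phi> m) / (real k * h - m)"
    using convex_on_slope_le[OF conv, of "real (k - 1) * h" m "real k * h"] x0 xt mk h
    by (auto intro: order.trans)
  have "(\<phi> (real (k - 1) * h) - \<phi> (real k * h)) / (real (k - 1) * h - real k * h) = dk \<phi> h N k"
    using k h rk by (simp add: dk_def field_simps)
  moreover have "(\<phi> (real k * h) - \<phi> m) / (real k * h - m) = (\<phi> m - \<phi> (real k * h)) / (m - real k * h)"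
    by (metis minus_diff_eq minus_divide_divide)
  ultimately have "dk \<phi> h N k \<le> (\<phi> m - \<phi> (real k * h)) / (m - real k * h)" using sl by simp
  then have "dk \<phi> h N k * (m - real k * h) \<le> \<phi> m - \<phi> (real k * h)"
    using mk by (simp add: le_divide_eq)
  then show ?thesis by simp
qed

lemma dk_inc:
  assumes conv: "convex_on {0..} \<phi>" and h: "0 < h" and k: "1 \<le> k" "Suc k \<le> N"
  shows "dk \<phi> h N k \<le> dk \<phi> h N (Suc k)"
proof -
  have "\<phi> (real (k - 1) * h + h) - \<phi> (real (k - 1) * h) \<le> \<phi> (real (k - 1) * h + 2 * h) - \<phi> (real (k - 1) * h + h)"
    by (rule midpoint_vex[OF conv]) (use h in auto)
  moreover have "real (k - 1) * h + h = real k * h" "real (k - 1) * h + 2 * h = real (Suc k) * h"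
    using k by (auto simp: algebra_simps of_nat_diff)
  ultimately have "\<phi> (real k * h) - \<phi> (real (k - 1) * h) \<le> \<phi> (real (Suc k) * h) - \<phi> (real k * h)" by simp
  then show ?thesis using k h by (simp add: dk_def divide_right_mono)
qed

definition Rv :: "(real \<Rightarrow> real) \<Rightarrow> real \<Rightarrow> nat \<Rightarrow> nat \<Rightarrow> real \<Rightarrow> real" where
  "Rv \<phi> h N j m = (\<Sum>k\<in>{1..j}. (dk \<phi> h N k - dk \<phi> h N (k - 1)) * max (m - real k * h) 0)"

lemma Rv_Suc: "Rv \<phi> h N (Suc j) m = Rv \<phi> h N j m + (dk \<phi> h N (Suc j) - dk \<phi> h N j) * max (m - real (Suc j) * h) 0"
  by (simp add: Rv_def)

lemma Rv_props:
  assumes conv: "convex_on {0..} \<phi>" and mono: "mono_on {0..} \<phi>" and h: "0 < h" and phi0: "\<phi> 0 = 0"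
  shows "j \<le> N \<Longrightarrow> (\<forall>m. 0 \<le> m \<longrightarrow> Rv \<phi> h N j m \<le> \<phi> m)
     \<and> (\<forall>m. real j * h \<le> m \<longrightarrow> Rv \<phi> h N j m = \<phi> (real (j - 1) * h) + dk \<phi> h N j * (m - real j * h))
     \<and> (\<forall>m. 0 \<le> m \<longrightarrow> m \<le> real (Suc j) * h \<longrightarrow> \<phi> (max (m - 2 * h) 0) \<le> Rv \<phi> h N j m)"
proof (induction j)
  case 0
  have "0 \<le> \<phi> m" if "0 \<le> m" for m using mono_onD[OF mono, of 0 m] that phi0 by simp
  moreover have "\<phi> (max (m - 2 * h) 0) = 0" if "m \<le> h" for m using that phi0 h by (simp add: max_def)
  ultimately show ?case using phi0 by (auto simp: Rv_def)
next
  case (Suc j)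
  then have IH: "\<forall>m. 0 \<le> m \<longrightarrow> Rv \<phi> h N j m \<le> \<phi> m"
     "\<forall>m. real j * h \<le> m \<longrightarrow> Rv \<phi> h N j m = \<phi> (real (j - 1) * h) + dk \<phi> h N j * (m - real j * h)"
     "\<forall>m. 0 \<le> m \<longrightarrow> m \<le> real (Suc j) * h \<longrightarrow> \<phi> (max (m - 2 * h) 0) \<le> Rv \<phi> h N j m"
    and jN: "Suc j \<le> N" by auto
  have exact: "Rv \<phi> h N (Suc j) m = \<phi> (real j * h) + dk \<phi> h N (Suc j) * (m - real (Suc j) * h)"
    if "real (Suc j) * h \<le> m" for m
  proof -
    have "real j * h \<le> m" using that h by (simp add: algebra_simps)
    then have "Rv \<phi> h N (Suc j) m = \<phi> (real (j - 1) * h) + dk \<phi> h N j * (m - real j * h)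
        + (dk \<phi> h N (Suc j) - dk \<phi> h N j) * (m - real (Suc j) * h)"
      using IH(2) that by (simp add: Rv_Suc max_def)
    also have "\<phi> (real (j - 1) * h) = \<phi> (real j * h) - dk \<phi> h N j * h"
      using dk_step[OF h, of j N \<phi>] jN by simp
    finally show ?thesis by (simp add: algebra_simps)
  qed
  have below: "Rv \<phi> h N (Suc j) m = Rv \<phi> h N j m" if "m \<le> real (Suc j) * h" for m
    using that by (simp add: Rv_Suc max_def)
  have p1: "Rv \<phi> h N (Suc j) m \<le> \<phi> m" if "0 \<le> m" for m
  proof (cases "m \<le> real (Suc j) * h")
    case True then show ?thesis using below IH(1) that by auto
  next
    case False
    then have mm: "real (Suc j) * h \<le> m" by simp
    have "\<phi> (real j * h) \<le> \<phi> (real (Suc j) * h)" using h by (intro mono_onD[OF mono]) auto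
    then have "Rv \<phi> h N (Suc j) m \<le> \<phi> (real (Suc j) * h) + dk \<phi> h N (Suc j) * (m - real (Suc j) * h)"
      using exact[OF mm] by simp
    also have "\<dots> \<le> \<phi> m" by (rule secant_vex[OF conv h _ jN mm]) simp
    finally show ?thesis .
  qed
  have p3: "\<phi> (max (m - 2 * h) 0) \<le> Rv \<phi> h N (Suc j) m" if "0 \<le> m" "m \<le> real (Suc (Suc j)) * h" for m
  proof (cases "m \<le> real (Suc j) * h")
    case True then show ?thesis using below IH(3) that by auto
  next
    case False
    then have mm: "real (Suc j) * h \<le> m" by simp
    have "\<phi> (max (m - 2 * h) 0) \<le> \<phi> (real j * h)"
      using that h by (intro mono_onD[OF mono]) (auto simp: algebra_simps)
    also have "\<dots> \<le> \<phi> (real j * h) + dk \<phi> h N (Suc j) * (m - real (Suc j) * h)"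
      using dk_nonneg[OF mono h] mm by simp
    finally show ?thesis using exact[OF mm] by simp
  qed
  show ?case using p1 p3 exact by auto
qed



definition phiE :: "(real \<Rightarrow> real) \<Rightarrow> ennreal \<Rightarrow> ennreal" where
  "phiE \<phi> m = (if m = \<infinity> then \<infinity> else ennreal (\<phi> (enn2real m)))"

definition hn :: "nat \<Rightarrow> real" where "hn n = 1 / (real n + 1)"
definition Nn :: "nat \<Rightarrow> nat" where "Nn n = Suc n * Suc n"

lemma hn_pos: "0 < hn n" by (simp add: hn_def)
lemma Nn_hn: "real (Nn n) * hn n = real n + 1"
proof -
  have "real (Nn n) = (real n + 1) * (real n + 1)" by (simp add: Nn_def algebra_simps)
  then show ?thesis by (simp add: hn_def)
qed
lemma Nn_ge1: "1 \<le> Nn n" by (simp add: Nn_def)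

definition phiA :: "(real \<Rightarrow> real) \<Rightarrow> bool" where
  "phiA \<phi> \<longleftrightarrow> \<phi> 0 = 0 \<and> strict_mono_on {0..} \<phi>
     \<and> (\<forall>x>0. \<forall>e>0. \<exists>y. 0 \<le> y \<and> y < x \<and> \<phi> x - e < \<phi> y)
     \<and> (\<forall>B. \<exists>x\<ge>0. B \<le> \<phi> x)"

lemma phiA_mono: "phiA \<phi> \<Longrightarrow> mono_on {0..} \<phi>"
  unfolding phiA_def by (auto intro: strict_mono_on_imp_mono_on)

lemma phiA_0: "phiA \<phi> \<Longrightarrow> \<phi> 0 = 0" by (simp add: phiA_def)

lemma phiA_nonneg: "phiA \<phi> \<Longrightarrow> 0 \<le> x \<Longrightarrow> 0 \<le> \<phi> x"
  using mono_onD[OF phiA_mono, of \<phi> 0 x] phiA_0[of \<phi>] by auto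

lemma phiE_mono: "phiA \<phi> \<Longrightarrow> mono (phiE \<phi>)"
proof (rule monoI)
  fix a b :: ennreal assume p: "phiA \<phi>" and ab: "a \<le> b"
  show "phiE \<phi> a \<le> phiE \<phi> b"
  proof (cases "b = \<infinity>")
    case False
    then have "a \<noteq> \<infinity>" using ab by (auto simp: top_unique)
    then show ?thesis using False ab
      by (auto simp: phiE_def less_top intro!: ennreal_leI mono_onD[OF phiA_mono[OF p]] enn2real_mono)
  qed (simp add: phiE_def)
qed

lemma phiA_left:
  assumes p: "phiA \<phi>" and x: "0 < x" and e: "0 < e"
  shows "\<exists>d>0. \<forall>z. x - d \<le> z \<longrightarrow> z \<le> x \<longrightarrow> \<phi> x - e < \<phi> z"
proof -
  obtain y where y: "0 \<le> y" "y < x" "\<phi> x - e < \<phi> y" using p x e unfolding phiA_def by blast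
  show ?thesis
  proof (intro exI[of _ "x - y"] conjI allI impI)
    show "0 < x - y" using y by simp
    fix z assume "x - (x - y) \<le> z" "z \<le> x"
    then have "\<phi> y \<le> \<phi> z" using y by (intro mono_onD[OF phiA_mono[OF p]]) auto
    then show "\<phi> x - e < \<phi> z" using y by simp
  qed
qed

lemma squeeze_lim:
  assumes p: "phiA \<phi>" and x: "0 \<le> x" and c: "0 < c"
    and up: "\<And>n. g n \<le> \<phi> x"
    and low: "\<And>n. x \<le> real n + 1 \<Longrightarrow> \<phi> (max (x - c * hn n) 0) \<le> g n"
  shows "g \<longlonglongrightarrow> \<phi> x"
proof (rule LIMSEQ_I)
  fix e :: real assume e: "0 < e"
  show "\<exists>no. \<forall>n\<ge>no. norm (g n - \<phi> x) < e"
  proof (cases "x = 0")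
    case True
    have "g n = \<phi> x" for n
    proof -
      have "0 \<le> c * hn n" using c hn_pos[of n] by simp
      then show ?thesis using up[of n] low[of n] True by (simp add: max_def)
    qed
    then show ?thesis using e by auto
  next
    case False
    then have x0: "0 < x" using x by simp
    obtain d where d: "d > 0" "\<And>z. x - d \<le> z \<Longrightarrow> z \<le> x \<Longrightarrow> \<phi> x - e < \<phi> z"
      using phiA_left[OF p x0 e] by blast
    obtain N1 :: nat where N1: "c / d < real N1" using reals_Archimedean2 by blast
    obtain N2 :: nat where N2: "x < real N2" using reals_Archimedean2 by blast
    show ?thesis
    proof (intro exI[of _ "N1 + N2"] allI impI)
      fix n assume n: "N1 + N2 \<le> n"
      have "c / d < real n + 1" using N1 n by linarith
      then have "c < d * (real n + 1)" using d by (simp add: field_simps)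
      then have ch: "c * hn n < d" by (simp add: hn_def field_simps)
      have "x \<le> real n + 1" using N2 n by linarith
      then have lo: "\<phi> (max (x - c * hn n) 0) \<le> g n" by (rule low)
      have "max (x - c * hn n) 0 = x - c * hn n \<or> max (x - c * hn n) 0 = 0" by auto
      have "\<phi> x - e < \<phi> (max (x - c * hn n) 0)"
        using ch c hn_pos[of n] x0 by (intro d(2)) (auto simp: max_def)
      then show "norm (g n - \<phi> x) < e" using lo up[of n] by simp
    qed
  qed
qed

definition Acave :: "(real \<Rightarrow> real) \<Rightarrow> nat \<Rightarrow> ennreal \<Rightarrow> ennreal" where
  "Acave \<phi> n m = (\<Sum>k\<in>{1..Nn n}. ennreal (dk \<phi> (hn n) (Nn n) k - dk \<phi> (hn n) (Nn n) (Suc k)) * min m (ennreal (real k * hn n)))"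

lemma Gc_sum:
  "(\<Sum>k\<in>{1..N}. (dk \<phi> h N k - dk \<phi> h N (Suc k)) * min x (real k * h)) = Gc \<phi> h N N x"
proof -
  have "(\<Sum>k\<in>{1..N}. (dk \<phi> h N k - dk \<phi> h N (Suc k)) * min x (real k * h))
      = (\<Sum>k\<in>{1..N}. x * (dk \<phi> h N k - dk \<phi> h N (Suc k)) + (dk \<phi> h N (Suc k) - dk \<phi> h N k) * max (x - real k * h) 0)"
    by (intro sum.cong refl) (auto simp: min_def max_def algebra_simps)
  also have "\<dots> = x * (\<Sum>k\<in>{1..N}. (dk \<phi> h N k - dk \<phi> h N (Suc k))) + (\<Sum>k\<in>{1..N}. (dk \<phi> h N (Suc k) - dk \<phi> h N k) * max (x - real k * h) 0)"
    by (simp add: sum.distrib sum_distrib_left)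
  also have "(\<Sum>k\<in>{1..N}. (dk \<phi> h N k - dk \<phi> h N (Suc k))) = - (\<Sum>k\<in>{1..N}. (dk \<phi> h N (Suc k) - dk \<phi> h N k))"
    by (simp add: sum_negf[symmetric])
  also have "(\<Sum>k\<in>{1..N}. (dk \<phi> h N (Suc k) - dk \<phi> h N k)) = dk \<phi> h N (Suc N) - dk \<phi> h N 1"
    by (cases N) (simp_all add: sum_Suc_diff)
  also have "dk \<phi> h N (Suc N) = 0" by (simp add: dk_big)
  finally show ?thesis by (simp add: Gc_def)
qed

lemma ennreal_mult_min:
  "0 \<le> e \<Longrightarrow> 0 \<le> x \<Longrightarrow> 0 \<le> y \<Longrightarrow> ennreal e * min (ennreal x) (ennreal y) = ennreal (e * min x y)"
  by (subst ennreal_mult) (auto simp: min_ennreal)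

lemma Acave_real:
  assumes p: "phiA \<phi>" and conc: "concave_on {0..} \<phi>" and x: "0 \<le> x"
  shows "Acave \<phi> n (ennreal x) = ennreal (Gc \<phi> (hn n) (Nn n) (Nn n) x)"
proof -
  have e: "0 \<le> dk \<phi> (hn n) (Nn n) k - dk \<phi> (hn n) (Nn n) (Suc k)" if "k \<in> {1..Nn n}" for k
    using dk_dec[OF conc phiA_mono[OF p] hn_pos, of k] that by auto
  have "Acave \<phi> n (ennreal x) = (\<Sum>k\<in>{1..Nn n}. ennreal ((dk \<phi> (hn n) (Nn n) k - dk \<phi> (hn n) (Nn n) (Suc k)) * min x (real k * hn n)))"
    unfolding Acave_def
    by (intro sum.cong refl ennreal_mult_min) (use e x hn_pos[of n] in auto)
  also have "\<dots> = ennreal (\<Sum>k\<in>{1..Nn n}. (dk \<phi> (hn n) (Nn n) k - dk \<phi> (hn n) (Nn n) (Suc k)) * min x (real k * hn n))"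
    by (rule sum_ennreal) (use e x hn_pos[of n] in auto)
  also have "(\<Sum>k\<in>{1..Nn n}. (dk \<phi> (hn n) (Nn n) k - dk \<phi> (hn n) (Nn n) (Suc k)) * min x (real k * hn n))
     = Gc \<phi> (hn n) (Nn n) (Nn n) x"
    by (rule Gc_sum)
  finally show ?thesis .
qed

lemma Acave_top:
  assumes p: "phiA \<phi>" and conc: "concave_on {0..} \<phi>"
  shows "Acave \<phi> n \<infinity> = ennreal (\<phi> (real n + 1))"
proof -
  have "Acave \<phi> n \<infinity> = Acave \<phi> n (ennreal (real (Nn n) * hn n))"
    unfolding Acave_def
  proof (intro sum.cong refl)
    fix k assume "k \<in> {1..Nn n}"
    then have "real k * hn n \<le> real (Nn n) * hn n" using hn_pos[of n] by (intro mult_right_mono) auto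
    then have "min (ennreal (real (Nn n) * hn n)) (ennreal (real k * hn n)) = ennreal (real k * hn n)"
      by (intro min_absorb2 ennreal_leI)
    moreover have "min \<infinity> (ennreal (real k * hn n)) = ennreal (real k * hn n)" by simp
    ultimately show "ennreal (dk \<phi> (hn n) (Nn n) k - dk \<phi> (hn n) (Nn n) (Suc k)) * min \<infinity> (ennreal (real k * hn n)) =
        ennreal (dk \<phi> (hn n) (Nn n) k - dk \<phi> (hn n) (Nn n) (Suc k)) * min (ennreal (real (Nn n) * hn n)) (ennreal (real k * hn n))"
      by simp
  qed
  also have "\<dots> = ennreal (Gc \<phi> (hn n) (Nn n) (Nn n) (real (Nn n) * hn n))"
    by (rule Acave_real[OF p conc]) (use hn_pos[of n] in simp)
  also have "Gc \<phi> (hn n) (Nn n) (Nn n) (real (Nn n) * hn n) = \<phi> (real (Nn n) * hn n)"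
    using Gc_props[OF conc phiA_mono[OF p] hn_pos phiA_0[OF p], where j="Nn n" and N="Nn n"] by auto
  finally show ?thesis by (simp add: Nn_hn)
qed

lemma Acave_le:
  assumes p: "phiA \<phi>" and conc: "concave_on {0..} \<phi>"
  shows "Acave \<phi> n m \<le> phiE \<phi> m"
proof (cases m)
  case (real x)
  then show ?thesis
    using Acave_real[OF p conc, of x n] Gc_le[OF conc phiA_mono[OF p] hn_pos[of n] phiA_0[OF p], where m=x and N="Nn n"]
    by (auto simp: phiE_def intro!: ennreal_leI)
qed (simp add: phiE_def)

lemma unbounded_lim:
  assumes p: "phiA \<phi>"
  shows "(\<lambda>n. ennreal (\<phi> (real n + 1))) \<longlonglongrightarrow> \<infinity>"
  unfolding infinity_ennreal_def tendsto_top_iff_ennreal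
proof (intro allI impI)
  fix l :: real assume "0 \<le> l"
  obtain x where x: "0 \<le> x" "l + 1 \<le> \<phi> x" using p unfolding phiA_def by blast
  obtain N :: nat where N: "x < real N" using reals_Archimedean2 by blast
  show "eventually (\<lambda>n. ennreal l < ennreal (\<phi> (real n + 1))) sequentially"
  proof (rule eventually_sequentiallyI[of N])
    fix n assume "N \<le> n"
    then have "\<phi> x \<le> \<phi> (real n + 1)" using N x by (intro mono_onD[OF phiA_mono[OF p]]) auto
    then show "ennreal l < ennreal (\<phi> (real n + 1))" using x \<open>0 \<le> l\<close> by (simp add: ennreal_less_iff)
  qed
qed

lemma Acave_lim:
  assumes p: "phiA \<phi>" and conc: "concave_on {0..} \<phi>"
  shows "(\<lambda>n. Acave \<phi> n m) \<longlonglongrightarrow> phiE \<phi> m"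
proof (cases m)
  case (real x)
  have "(\<lambda>n. Gc \<phi> (hn n) (Nn n) (Nn n) x) \<longlonglongrightarrow> \<phi> x"
  proof (rule squeeze_lim[where c=1, OF p real(1)])
    show "Gc \<phi> (hn n) (Nn n) (Nn n) x \<le> \<phi> x" for n
      by (rule Gc_le[OF conc phiA_mono[OF p] hn_pos phiA_0[OF p] real(1)])
    show "\<phi> (max (x - 1 * hn n) 0) \<le> Gc \<phi> (hn n) (Nn n) (Nn n) x" if "x \<le> real n + 1" for n
    proof -
      have "x \<le> real (Suc (Nn n)) * hn n" using that Nn_hn[of n] hn_pos[of n] by (simp add: algebra_simps)
      then show ?thesis
        using Gc_props[OF conc phiA_mono[OF p] hn_pos phiA_0[OF p], where j="Nn n" and N="Nn n"] real(1) by auto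
    qed
  qed simp
  then have "(\<lambda>n. ennreal (Gc \<phi> (hn n) (Nn n) (Nn n) x)) \<longlonglongrightarrow> ennreal (\<phi> x)"
    by (rule tendsto_ennrealI)
  then show ?thesis using Acave_real[OF p conc real(1)] real by (simp add: phiE_def)
next
  case top
  then show ?thesis using unbounded_lim[OF p] Acave_top[OF p conc] by (simp add: phiE_def)
qed


definition Avex :: "(real \<Rightarrow> real) \<Rightarrow> nat \<Rightarrow> ennreal \<Rightarrow> ennreal" where
  "Avex \<phi> n m = (\<Sum>k\<in>{1..Nn n}. ennreal (dk \<phi> (hn n) (Nn n) k - dk \<phi> (hn n) (Nn n) (k - 1)) * (m - ennreal (real k * hn n)))"

lemma ennreal_mult_minus:
  "0 \<le> c \<Longrightarrow> 0 \<le> y \<Longrightarrow> ennreal c * (ennreal x - ennreal y) = ennreal (c * max (x - y) 0)"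
proof -
  assume c: "0 \<le> c" and y: "0 \<le> y"
  have m: "ennreal (x - y) = ennreal (max (x - y) 0)"
    by (cases "x - y \<ge> 0") (auto simp: ennreal_neg max_def)
  show ?thesis using c y by (simp add: ennreal_minus m ennreal_mult)
qed

lemma cvex_nonneg:
  assumes p: "phiA \<phi>" and conv: "convex_on {0..} \<phi>" and k: "k \<in> {1..Nn n}"
  shows "0 \<le> dk \<phi> (hn n) (Nn n) k - dk \<phi> (hn n) (Nn n) (k - 1)"
proof (cases "k = 1")
  case True then show ?thesis using dk_nonneg[OF phiA_mono[OF p] hn_pos] by simp
next
  case False
  then have "1 \<le> k - 1" "Suc (k - 1) \<le> Nn n" using k by auto
  from dk_inc[OF conv hn_pos this] False k show ?thesis by (simp add: Suc_diff_1)
qed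

lemma Avex_real:
  assumes p: "phiA \<phi>" and conv: "convex_on {0..} \<phi>" and x: "0 \<le> x"
  shows "Avex \<phi> n (ennreal x) = ennreal (Rv \<phi> (hn n) (Nn n) (Nn n) x)"
proof -
  have "Avex \<phi> n (ennreal x) = (\<Sum>k\<in>{1..Nn n}. ennreal ((dk \<phi> (hn n) (Nn n) k - dk \<phi> (hn n) (Nn n) (k - 1)) * max (x - real k * hn n) 0))"
    unfolding Avex_def
    by (intro sum.cong refl ennreal_mult_minus) (use cvex_nonneg[OF p conv] hn_pos[of n] in auto)
  also have "\<dots> = ennreal (Rv \<phi> (hn n) (Nn n) (Nn n) x)"
    unfolding Rv_def by (rule sum_ennreal) (use cvex_nonneg[OF p conv] in auto)
  finally show ?thesis .
qed

lemma Avex_top: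
  assumes p: "phiA \<phi>" and conv: "convex_on {0..} \<phi>"
  shows "Avex \<phi> n \<infinity> = \<infinity>"
proof -
  have "0 < \<phi> (hn n)"
    using p hn_pos[of n] unfolding phiA_def by (auto dest: strict_mono_onD[of _ _ 0 "hn n"])
  then have d1: "0 < dk \<phi> (hn n) (Nn n) 1 - dk \<phi> (hn n) (Nn n) (1 - 1)"
    using phiA_0[OF p] hn_pos[of n] Nn_ge1[of n] by (simp add: dk_def)
  have "ennreal (dk \<phi> (hn n) (Nn n) 1 - dk \<phi> (hn n) (Nn n) (1 - 1)) * (\<infinity> - ennreal (real 1 * hn n)) \<le> Avex \<phi> n \<infinity>"
    unfolding Avex_def
    by (rule member_le_sum[of 1 "{1..Nn n}" "\<lambda>k. ennreal (dk \<phi> (hn n) (Nn n) k - dk \<phi> (hn n) (Nn n) (k - 1)) * (\<infinity> - ennreal (real k * hn n))"])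
       (use Nn_ge1[of n] in auto)
  moreover have "ennreal (dk \<phi> (hn n) (Nn n) 1 - dk \<phi> (hn n) (Nn n) (1 - 1)) * (\<infinity> - ennreal (real 1 * hn n)) = \<infinity>"
    using d1 by (simp add: ennreal_mult_top)
  ultimately show ?thesis by (simp add: top_unique)
qed

lemma Avex_le:
  assumes p: "phiA \<phi>" and conv: "convex_on {0..} \<phi>"
  shows "Avex \<phi> n m \<le> phiE \<phi> m"
proof (cases m)
  case (real x)
  then show ?thesis
    using Avex_real[OF p conv, of x n] Rv_props[OF conv phiA_mono[OF p] hn_pos[of n] phiA_0[OF p], where j="Nn n" and N="Nn n"]
    by (auto simp: phiE_def intro!: ennreal_leI)
qed (simp add: phiE_def)

lemma Avex_lim:
  assumes p: "phiA \<phi>" and conv: "convex_on {0..} \<phi>"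
  shows "(\<lambda>n. Avex \<phi> n m) \<longlonglongrightarrow> phiE \<phi> m"
proof (cases m)
  case (real x)
  have "(\<lambda>n. Rv \<phi> (hn n) (Nn n) (Nn n) x) \<longlonglongrightarrow> \<phi> x"
  proof (rule squeeze_lim[where c=2, OF p real(1)])
    show "Rv \<phi> (hn n) (Nn n) (Nn n) x \<le> \<phi> x" for n
      using Rv_props[OF conv phiA_mono[OF p] hn_pos[of n] phiA_0[OF p], where j="Nn n" and N="Nn n"] real(1) by auto
    show "\<phi> (max (x - 2 * hn n) 0) \<le> Rv \<phi> (hn n) (Nn n) (Nn n) x" if "x \<le> real n + 1" for n
    proof -
      have "x \<le> real (Suc (Nn n)) * hn n" using that Nn_hn[of n] hn_pos[of n] by (simp add: algebra_simps)
      then show ?thesis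
        using Rv_props[OF conv phiA_mono[OF p] hn_pos phiA_0[OF p], where j="Nn n" and N="Nn n"] real(1) by auto
    qed
  qed simp
  then have "(\<lambda>n. ennreal (Rv \<phi> (hn n) (Nn n) (Nn n) x)) \<longlonglongrightarrow> ennreal (\<phi> x)"
    by (rule tendsto_ennrealI)
  then show ?thesis using Avex_real[OF p conv real(1)] real by (simp add: phiE_def)
next
  case top
  then show ?thesis using Avex_top[OF p conv] by (simp add: phiE_def)
qed




lemma PhiG_meas:
  fixes g :: "ennreal \<Rightarrow> ennreal"
  assumes "u \<in> borel_measurable M0" "mono g"
  shows "(\<lambda>t. g (dfun u t) * indicator {0..} t) \<in> borel_measurable lborel"
  using mono_dfun_borel[OF assms] by simp

lemma PhiG_lim:
  fixes A :: "nat \<Rightarrow> ennreal \<Rightarrow> ennreal" and B :: "ennreal \<Rightarrow> ennreal"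
  assumes u: "u \<in> borel_measurable M0" and monoA: "\<And>n. mono (A n)" and monoB: "mono B"
    and le: "\<And>n m. A n m \<le> B m" and lim: "\<And>m. (\<lambda>n. A n m) \<longlonglongrightarrow> B m"
  shows "(\<lambda>n. PhiG (A n) u) \<longlonglongrightarrow> PhiG B u"
proof (rule Liminf_eq_Limsup)
  show "\<not> trivial_limit sequentially" by simp
  have meas: "\<And>n. (\<lambda>t. A n (dfun u t) * indicator {0..} t) \<in> borel_measurable lborel"
    by (rule PhiG_meas[OF u monoA])
  have ptw: "liminf (\<lambda>n. A n (dfun u t) * indicator {0..} t) = B (dfun u t) * indicator {0..} t" for t :: real
  proof (rule lim_imp_Liminf)
    show "\<not> trivial_limit sequentially" by simp
    show "(\<lambda>n. A n (dfun u t) * indicator {0..} t) \<longlonglongrightarrow> B (dfun u t) * indicator {0..} t"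
      by (cases "0 \<le> t") (auto simp: indicator_def intro: lim)
  qed
  have lo: "PhiG B u \<le> liminf (\<lambda>n. PhiG (A n) u)"
    unfolding PhiG_def using nn_integral_liminf[of "\<lambda>n t. A n (dfun u t) * indicator {0..} t" lborel, OF meas]
    by (simp add: ptw)
  have hi: "limsup (\<lambda>n. PhiG (A n) u) \<le> PhiG B u"
    by (rule Limsup_bounded, rule always_eventually) (auto simp: PhiG_def intro!: nn_integral_mono mult_right_mono le)
  have "liminf (\<lambda>n. PhiG (A n) u) \<le> limsup (\<lambda>n. PhiG (A n) u)" by (rule Liminf_le_Limsup) simp
  then show "liminf (\<lambda>n. PhiG (A n) u) = PhiG B u" "limsup (\<lambda>n. PhiG (A n) u) = PhiG B u"
    using lo hi by (auto intro: antisym)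
qed

lemma PhiG_sum_cmult:
  fixes g :: "nat \<Rightarrow> ennreal \<Rightarrow> ennreal" and c :: "nat \<Rightarrow> ennreal"
  assumes u: "u \<in> borel_measurable M0" and fin: "finite K" and mono: "\<And>k. mono (g k)"
  shows "PhiG (\<lambda>m. \<Sum>k\<in>K. c k * g k m) u = (\<Sum>k\<in>K. c k * PhiG (g k) u)"
proof -
  have "PhiG (\<lambda>m. \<Sum>k\<in>K. c k * g k m) u = (\<integral>\<^sup>+t. (\<Sum>k\<in>K. c k * (g k (dfun u t) * indicator {0..} t)) \<partial>lborel)"
    unfolding PhiG_def by (intro nn_integral_cong) (simp add: sum_distrib_right mult.assoc)
  also have "\<dots> = (\<Sum>k\<in>K. (\<integral>\<^sup>+t. c k * (g k (dfun u t) * indicator {0..} t) \<partial>lborel))"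
    by (rule nn_integral_sum) (use PhiG_meas[OF u mono] in auto)
  also have "\<dots> = (\<Sum>k\<in>K. c k * PhiG (g k) u)"
    unfolding PhiG_def by (intro sum.cong refl nn_integral_cmult) (use PhiG_meas[OF u mono] in auto)
  finally show ?thesis .
qed

lemma mono_min_k: "mono (\<lambda>m::ennreal. min m a)" by (auto intro: monoI min.mono)
lemma mono_minus_k: "mono (\<lambda>m::ennreal. m - a)" by (auto intro: monoI ennreal_minus_mono)

lemma Acave_sum: "Acave \<phi> n = (\<lambda>m. \<Sum>k\<in>{1..Nn n}. ennreal (dk \<phi> (hn n) (Nn n) k - dk \<phi> (hn n) (Nn n) (Suc k)) * (\<lambda>m. min m (ennreal (real k * hn n))) m)"
  by (simp add: Acave_def fun_eq_iff)

lemma Avex_sum: "Avex \<phi> n = (\<lambda>m. \<Sum>k\<in>{1..Nn n}. ennreal (dk \<phi> (hn n) (Nn n) k - dk \<phi> (hn n) (Nn n) (k - 1)) * (\<lambda>m. m - ennreal (real k * hn n)) m)"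
  by (simp add: Avex_def fun_eq_iff)

lemma mono_Acave: "mono (Acave \<phi> n)"
  unfolding Acave_def by (intro monoI sum_mono mult_left_mono min.mono) auto

lemma mono_Avex: "mono (Avex \<phi> n)"
  unfolding Avex_def by (intro monoI sum_mono mult_left_mono ennreal_minus_mono) auto

lemma Phi_cave_sub:
  assumes p: "phiA \<phi>" and conc: "concave_on {0..} \<phi>"
    and u: "u \<in> borel_measurable M0" and v: "v \<in> borel_measurable M0"
  shows "PhiG (phiE \<phi>) (\<lambda>y. u y + v y) \<le> PhiG (phiE \<phi>) u + PhiG (phiE \<phi>) v"
proof -
  have uv: "(\<lambda>y. u y + v y) \<in> borel_measurable M0" using u v by simp
  have L: "(\<lambda>n. PhiG (Acave \<phi> n) w) \<longlonglongrightarrow> PhiG (phiE \<phi>) w" if "w \<in> borel_measurable M0" for w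
    by (rule PhiG_lim[OF that mono_Acave phiE_mono[OF p] Acave_le[OF p conc] Acave_lim[OF p conc]])
  have step: "PhiG (Acave \<phi> n) (\<lambda>y. u y + v y) \<le> PhiG (Acave \<phi> n) u + PhiG (Acave \<phi> n) v" for n
  proof -
    let ?c = "\<lambda>k. ennreal (dk \<phi> (hn n) (Nn n) k - dk \<phi> (hn n) (Nn n) (Suc k))"
    let ?g = "\<lambda>k m. min m (ennreal (real k * hn n))"
    have "PhiG (Acave \<phi> n) (\<lambda>y. u y + v y) = (\<Sum>k\<in>{1..Nn n}. ?c k * PhiG (?g k) (\<lambda>y. u y + v y))"
      unfolding Acave_sum by (rule PhiG_sum_cmult[OF uv]) (auto intro: mono_min_k)
    also have "\<dots> \<le> (\<Sum>k\<in>{1..Nn n}. ?c k * (PhiG (?g k) u + PhiG (?g k) v))"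
      by (intro sum_mono mult_left_mono Ksub[OF u v]) (use hn_pos[of n] in auto)
    also have "\<dots> = (\<Sum>k\<in>{1..Nn n}. ?c k * PhiG (?g k) u) + (\<Sum>k\<in>{1..Nn n}. ?c k * PhiG (?g k) v)"
      by (simp add: distrib_left sum.distrib)
    also have "\<dots> = PhiG (Acave \<phi> n) u + PhiG (Acave \<phi> n) v"
      unfolding Acave_sum
      by (subst (1 2) PhiG_sum_cmult) (auto intro: mono_min_k u v)
    finally show ?thesis .
  qed
  show ?thesis
    by (rule LIMSEQ_le[OF L[OF uv] tendsto_add[OF L[OF u] L[OF v]]]) (use step in auto)
qed

lemma Phi_vex_sup:
  assumes p: "phiA \<phi>" and conv: "convex_on {0..} \<phi>"
    and u: "u \<in> borel_measurable M0" and v: "v \<in> borel_measurable M0"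
  shows "PhiG (phiE \<phi>) u + PhiG (phiE \<phi>) v \<le> PhiG (phiE \<phi>) (\<lambda>y. u y + v y)"
proof -
  have uv: "(\<lambda>y. u y + v y) \<in> borel_measurable M0" using u v by simp
  have L: "(\<lambda>n. PhiG (Avex \<phi> n) w) \<longlonglongrightarrow> PhiG (phiE \<phi>) w" if "w \<in> borel_measurable M0" for w
    by (rule PhiG_lim[OF that mono_Avex phiE_mono[OF p] Avex_le[OF p conv] Avex_lim[OF p conv]])
  have step: "PhiG (Avex \<phi> n) u + PhiG (Avex \<phi> n) v \<le> PhiG (Avex \<phi> n) (\<lambda>y. u y + v y)" for n
  proof -
    let ?c = "\<lambda>k. ennreal (dk \<phi> (hn n) (Nn n) k - dk \<phi> (hn n) (Nn n) (k - 1))"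
    let ?g = "\<lambda>k m. m - ennreal (real k * hn n)"
    have "PhiG (Avex \<phi> n) u + PhiG (Avex \<phi> n) v = (\<Sum>k\<in>{1..Nn n}. ?c k * PhiG (?g k) u) + (\<Sum>k\<in>{1..Nn n}. ?c k * PhiG (?g k) v)"
      unfolding Avex_sum by (subst (1 2) PhiG_sum_cmult) (auto intro: mono_minus_k u v)
    also have "\<dots> = (\<Sum>k\<in>{1..Nn n}. ?c k * (PhiG (?g k) u + PhiG (?g k) v))"
      by (simp add: distrib_left sum.distrib)
    also have "\<dots> \<le> (\<Sum>k\<in>{1..Nn n}. ?c k * PhiG (?g k) (\<lambda>y. u y + v y))"
      by (intro sum_mono mult_left_mono Lsup[OF u v]) (use hn_pos[of n] in auto)
    also have "\<dots> = PhiG (Avex \<phi> n) (\<lambda>y. u y + v y)"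
      unfolding Avex_sum by (rule PhiG_sum_cmult[OF uv, symmetric]) (auto intro: mono_minus_k)
    finally show ?thesis .
  qed
  show ?thesis
    by (rule LIMSEQ_le[OF tendsto_add[OF L[OF u] L[OF v]] L[OF uv]]) (use step in auto)
qed


lemma dfun_zero: "0 \<le> t \<Longrightarrow> dfun (\<lambda>y. 0) t = 0"
  by (simp add: dfun_def)

lemma PhiG_zero:
  assumes p: "phiA \<phi>"
  shows "PhiG (phiE \<phi>) (\<lambda>y. 0) = 0"
proof -
  have "phiE \<phi> (dfun (\<lambda>y. 0) t) * indicator {0..} t = 0" for t :: real
    by (cases "0 \<le> t") (auto simp: dfun_zero phiE_def phiA_0[OF p])
  then have "(\<lambda>t::real. phiE \<phi> (dfun (\<lambda>y. 0) t) * indicator {0..} t) = (\<lambda>t. 0)" by auto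
  then show ?thesis by (simp add: PhiG_def)
qed

lemma Phi_cave_sum:
  assumes p: "phiA \<phi>" and conc: "concave_on {0..} \<phi>" and fin: "finite I"
    and U: "\<And>i. i \<in> I \<Longrightarrow> U i \<in> borel_measurable M0"
  shows "PhiG (phiE \<phi>) (\<lambda>y. \<Sum>i\<in>I. U i y) \<le> (\<Sum>i\<in>I. PhiG (phiE \<phi>) (U i))"
  using fin U
proof (induction I rule: finite_induct)
  case empty then show ?case using PhiG_zero[OF p] by simp
next
  case (insert i I)
  have "PhiG (phiE \<phi>) (\<lambda>y. \<Sum>j\<in>insert i I. U j y) = PhiG (phiE \<phi>) (\<lambda>y. U i y + (\<Sum>j\<in>I. U j y))"
    using insert by simp
  also have "\<dots> \<le> PhiG (phiE \<phi>) (U i) + PhiG (phiE \<phi>) (\<lambda>y. \<Sum>j\<in>I. U j y)"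
    by (rule Phi_cave_sub[OF p conc]) (use insert in auto)
  also have "\<dots> \<le> PhiG (phiE \<phi>) (U i) + (\<Sum>j\<in>I. PhiG (phiE \<phi>) (U j))"
    using insert by (intro add_left_mono) auto
  finally show ?case using insert by simp
qed

lemma Phi_vex_sum:
  assumes p: "phiA \<phi>" and conv: "convex_on {0..} \<phi>" and fin: "finite I"
    and U: "\<And>i. i \<in> I \<Longrightarrow> U i \<in> borel_measurable M0"
  shows "(\<Sum>i\<in>I. PhiG (phiE \<phi>) (U i)) \<le> PhiG (phiE \<phi>) (\<lambda>y. \<Sum>i\<in>I. U i y)"
  using fin U
proof (induction I rule: finite_induct)
  case empty then show ?case by simp
next
  case (insert i I)
  have "(\<Sum>j\<in>insert i I. PhiG (phiE \<phi>) (U j)) = PhiG (phiE \<phi>) (U i) + (\<Sum>j\<in>I. PhiG (phiE \<phi>) (U j))"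
    using insert by simp
  also have "\<dots> \<le> PhiG (phiE \<phi>) (U i) + PhiG (phiE \<phi>) (\<lambda>y. \<Sum>j\<in>I. U j y)"
    using insert by (intro add_left_mono) auto
  also have "\<dots> \<le> PhiG (phiE \<phi>) (\<lambda>y. U i y + (\<Sum>j\<in>I. U j y))"
    by (rule Phi_vex_sup[OF p conv]) (use insert in auto)
  finally show ?case using insert by simp
qed

lemma dfun_scale:
  assumes c: "0 < c"
  shows "dfun (\<lambda>y. ennreal c * u y) t = dfun u (t / c)"
proof -
  have "ennreal t < ennreal c * a \<longleftrightarrow> ennreal (t / c) < a" for a
  proof (cases a)
    case (real r)
    then show ?thesis using c
      by (cases "0 \<le> t") (auto simp: ennreal_mult[symmetric] ennreal_less_iff field_simps ennreal_neg simp del: ennreal_mult)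
  next
    case top
    then show ?thesis using c by (simp add: ennreal_mult_top)
  qed
  then show ?thesis by (simp add: dfun_def)
qed

lemma PhiG_scale:
  fixes g :: "ennreal \<Rightarrow> ennreal"
  assumes u: "u \<in> borel_measurable M0" and g: "mono g" and c: "0 < c"
  shows "PhiG g (\<lambda>y. ennreal c * u y) = ennreal c * PhiG g u"
proof -
  have m: "(\<lambda>t. g (dfun u t) * indicator {0..} t) \<in> borel_measurable borel"
    using PhiG_meas[OF u g] by simp
  have m1: "(\<lambda>t. g (dfun u t)) \<in> borel_measurable borel" by (rule mono_dfun_borel[OF u g])
  have m1'[measurable]: "(\<lambda>x. g (dfun u (x / c))) \<in> borel_measurable borel"
    using measurable_compose[of "\<lambda>x. x/c" borel borel "\<lambda>t. g (dfun u t)" borel] m1 by simp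
  have m2: "(\<lambda>x. g (dfun u (x / c)) * indicator {0..} x) \<in> borel_measurable borel"
    by measurable
  have "PhiG g (\<lambda>y. ennreal c * u y) = (\<integral>\<^sup>+x. g (dfun u (x / c)) * indicator {0..} x \<partial>lborel)"
    unfolding PhiG_def using c by (simp add: dfun_scale)
  also have "\<dots> = ennreal \<bar>c\<bar> * (\<integral>\<^sup>+x. g (dfun u ((0 + c * x) / c)) * indicator {0..} (0 + c * x) \<partial>lborel)"
    using nn_integral_real_affine[OF _ , of "\<lambda>x. g (dfun u (x / c)) * indicator {0..} x" c 0] m2 c by simp
  also have "(\<integral>\<^sup>+x. g (dfun u ((0 + c * x) / c)) * indicator {0..} (0 + c * x) \<partial>lborel) = PhiG g u"
    unfolding PhiG_def using c by (intro nn_integral_cong) (auto simp: indicator_def zero_le_mult_iff)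
  finally show ?thesis using c by simp
qed

lemma PhiG_mono:
  fixes g :: "ennreal \<Rightarrow> ennreal"
  assumes v: "v \<in> borel_measurable M0" and g: "mono g" and le: "\<And>y. 0 \<le> y \<Longrightarrow> u y \<le> v y"
  shows "PhiG g u \<le> PhiG g v"
  unfolding PhiG_def
proof (intro nn_integral_mono mult_right_mono)
  fix t :: real
  have sv: "{y \<in> space M0. ennreal t < v y} \<in> sets M0" using v by measurable
  have "dfun u t \<le> dfun v t"
    unfolding dfun_def using le
    by (intro emeasure_mono[OF _ sv]) (auto simp: space_M0 intro: less_le_trans)
  then show "g (dfun u t) \<le> g (dfun v t)" using g by (auto dest: monoD)
qed auto




definition gf :: "(real \<Rightarrow> real) \<Rightarrow> bool" where
  "gf f \<longleftrightarrow> strict_mono_on {0..} f \<and> f 0 = 0 \<and> (\<forall>y\<ge>0. \<exists>x\<ge>0. f x = y)"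

lemma gf_less: "gf f \<Longrightarrow> 0 \<le> x \<Longrightarrow> 0 \<le> y \<Longrightarrow> f x < f y \<longleftrightarrow> x < y"
  unfolding gf_def by (metis atLeast_iff linorder_neq_iff order_less_imp_not_less strict_mono_onD)

lemma gf_le: "gf f \<Longrightarrow> 0 \<le> x \<Longrightarrow> 0 \<le> y \<Longrightarrow> f x \<le> f y \<longleftrightarrow> x \<le> y"
  using gf_less[of f y x] by (auto simp: not_less[symmetric])

lemma gf_0: "gf f \<Longrightarrow> f 0 = 0" by (simp add: gf_def)

lemma gf_nonneg: "gf f \<Longrightarrow> 0 \<le> x \<Longrightarrow> 0 \<le> f x"
  using gf_le[of f 0 x] gf_0[of f] by simp

lemma gf_pos: "gf f \<Longrightarrow> 0 < x \<Longrightarrow> 0 < f x"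
  using gf_less[of f 0 x] gf_0[of f] by simp

lemma gf_surj: "gf f \<Longrightarrow> 0 \<le> y \<Longrightarrow> \<exists>x\<ge>0. f x = y" by (simp add: gf_def)

lemma gf_inv:
  assumes "gf f" "0 \<le> y"
  shows "0 \<le> inv_into {0..} f y" "f (inv_into {0..} f y) = y"
proof -
  obtain x where "x \<ge> 0" "f x = y" using gf_surj[OF assms] by blast
  then have "y \<in> f ` {0..}" by auto
  then show "0 \<le> inv_into {0..} f y" "f (inv_into {0..} f y) = y"
    using inv_into_into[of y f "{0..}"] f_inv_into_f[of y f "{0..}"] by auto
qed

lemma gf_inv_f:
  assumes "gf f" "0 \<le> x"
  shows "inv_into {0..} f (f x) = x"
proof -
  have "inj_on f {0..}" using assms(1) unfolding gf_def by (auto intro: strict_mono_on_imp_inj_on)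
  then show ?thesis using assms(2) by (simp add: inv_into_f_f)
qed

lemma gf_inv_gf: "gf f \<Longrightarrow> gf (inv_into {0..} f)"
  unfolding gf_def
proof (intro conjI allI impI)
  assume f: "strict_mono_on {0..} f \<and> f 0 = 0 \<and> (\<forall>y\<ge>0. \<exists>x\<ge>0. f x = y)"
  then have g: "gf f" by (simp add: gf_def)
  show "strict_mono_on {0..} (inv_into {0..} f)"
  proof (rule strict_mono_onI)
    fix a b :: real assume ab: "a \<in> {0..}" "b \<in> {0..}" "a < b"
    show "inv_into {0..} f a < inv_into {0..} f b"
      using gf_less[OF g gf_inv(1)[OF g, of a] gf_inv(1)[OF g, of b]] gf_inv(2)[OF g, of a] gf_inv(2)[OF g, of b] ab
      by auto
  qed
  show "inv_into {0..} f 0 = 0" using gf_inv_f[OF g, of 0] f by simp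
  fix y :: real assume "0 \<le> y"
  then show "\<exists>x\<ge>0. inv_into {0..} f x = y" using gf_inv_f[OF g] gf_nonneg[OF g] by (intro exI[of _ "f y"]) auto
qed

lemma gf_comp: "gf f \<Longrightarrow> gf g \<Longrightarrow> gf (f \<circ> g)"
  unfolding gf_def
proof (intro conjI allI impI)
  assume f: "strict_mono_on {0..} f \<and> f 0 = 0 \<and> (\<forall>y\<ge>0. \<exists>x\<ge>0. f x = y)"
    and g: "strict_mono_on {0..} g \<and> g 0 = 0 \<and> (\<forall>y\<ge>0. \<exists>x\<ge>0. g x = y)"
  then have F: "gf f" and G: "gf g" by (simp_all add: gf_def)
  show "strict_mono_on {0..} (f \<circ> g)"
    by (rule strict_mono_onI) (use gf_less[OF F] gf_less[OF G] gf_nonneg[OF G] in auto)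
  show "(f \<circ> g) 0 = 0" using f g by simp
  fix y :: real assume "0 \<le> y"
  then obtain z where z: "z \<ge> 0" "f z = y" using gf_surj[OF F] by blast
  then obtain x where "x \<ge> 0" "g x = z" using gf_surj[OF G] by blast
  then show "\<exists>x\<ge>0. (f \<circ> g) x = y" using z by auto
qed

lemma gf_phiA:
  assumes f: "gf f"
  shows "phiA f"
  unfolding phiA_def
proof (intro conjI allI impI)
  show "f 0 = 0" by (rule gf_0[OF f])
  show "strict_mono_on {0..} f" using f by (simp add: gf_def)
  fix x e :: real assume x: "0 < x" and e: "0 < e"
  show "\<exists>y. 0 \<le> y \<and> y < x \<and> f x - e < f y"
  proof (cases "f x - e < 0")
    case True then show ?thesis using x gf_0[OF f] by (intro exI[of _ 0]) auto
  next
    case False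
    then obtain y where y: "y \<ge> 0" "f y = f x - e / 2" using gf_surj[OF f, of "f x - e/2"] e by auto
    have "y < x" using gf_less[OF f y(1), of x] x y e by simp
    then show ?thesis using y e by auto
  qed
next
  fix B :: real
  obtain x where "x \<ge> 0" "f x = max B 0" using gf_surj[OF f, of "max B 0"] by auto
  then show "\<exists>x\<ge>0. B \<le> f x" by (intro exI[of _ x]) auto
qed

lemma phi_function_gf:
  assumes F: "phi_function F"
  shows "gf F"
  unfolding gf_def
proof (intro conjI allI impI)
  show sm: "strict_mono_on {0..} F" "F 0 = 0" using F by (auto simp: phi_function_def)
  fix y :: real assume y: "0 \<le> y"
  have "eventually (\<lambda>x. y \<le> F x) at_top" using F unfolding phi_function_def filterlim_at_top by auto
  then obtain T where T: "\<And>x. T \<le> x \<Longrightarrow> y \<le> F x" unfolding eventually_at_top_linorder by blast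
  let ?b = "max T 0"
  have "\<exists>x\<ge>0. x \<le> ?b \<and> F x = y"
  proof (rule IVT')
    show "F 0 \<le> y" using sm y by simp
    show "y \<le> F ?b" using T by simp
    show "0 \<le> ?b" by simp
    show "continuous_on {0..?b} F" using F unfolding phi_function_def by (auto intro: continuous_on_subset)
  qed
  then show "\<exists>x\<ge>0. F x = y" by blast
qed

lemma phi_tilde_gf:
  assumes F: "phi_function F"
  shows "gf (phi_tilde F)"
proof -
  have g: "gf F" by (rule phi_function_gf[OF F])
  show ?thesis unfolding gf_def
  proof (intro conjI allI impI)
    show "phi_tilde F 0 = 0" by (simp add: phi_tilde_def)
    show "strict_mono_on {0..} (phi_tilde F)"
    proof (rule strict_mono_onI)
      fix a b :: real assume ab: "a \<in> {0..}" "b \<in> {0..}" "a < b"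
      show "phi_tilde F a < phi_tilde F b"
      proof (cases "a = 0")
        case True
        then show ?thesis using ab gf_pos[OF g, of "1/b"] by (simp add: phi_tilde_def)
      next
        case False
        then have a0: "0 < a" using ab by simp
        have "1/b < 1/a" using a0 ab by (simp add: frac_less2)
        then have "F (1/b) < F (1/a)" using gf_less[OF g, of "1/b" "1/a"] ab a0 by simp
        moreover have "0 < F (1/b)" using gf_pos[OF g, of "1/b"] ab a0 by simp
        ultimately show ?thesis using a0 ab by (simp add: phi_tilde_def frac_less2)
      qed
    qed
    fix y :: real assume y: "0 \<le> y"
    show "\<exists>x\<ge>0. phi_tilde F x = y"
    proof (cases "y = 0")
      case True then show ?thesis by (intro exI[of _ 0]) (simp add: phi_tilde_def)
    next
      case False
      then have y0: "0 < y" using y by simp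
      obtain z where z: "z \<ge> 0" "F z = 1 / y" using gf_surj[OF g, of "1/y"] y0 by auto
      have "z \<noteq> 0" using z y0 gf_0[OF g] by auto
      then have "0 < z" using z by simp
      then show ?thesis using z y0 by (intro exI[of _ "1/z"]) (simp add: phi_tilde_def)
    qed
  qed
qed



lemma M0_emeasure: "A \<subseteq> {0..} \<Longrightarrow> emeasure M0 A = emeasure lebesgue A"
  unfolding M0_def by (rule emeasure_restrict_space) auto

lemma M0_emeasure_borel: "A \<subseteq> {0..} \<Longrightarrow> A \<in> sets borel \<Longrightarrow> emeasure M0 A = emeasure lborel A"
  by (simp add: M0_emeasure)

lemma M0_Ico: "0 \<le> a \<Longrightarrow> emeasure M0 {0..<a} = ennreal a"
  by (subst M0_emeasure_borel) auto

lemma M0_Icc: "0 \<le> a \<Longrightarrow> emeasure M0 {0..a} = ennreal a"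
  by (subst M0_emeasure_borel) auto

lemma M0_all: "emeasure M0 {0..} = \<infinity>"
  by (subst M0_emeasure_borel) (auto simp: emeasure_lborel_Ici_top)

definition Wf :: "(real \<Rightarrow> real) \<Rightarrow> (real \<Rightarrow> real) \<Rightarrow> real \<Rightarrow> real" where
  "Wf F G = phi_tilde F \<circ> phi_inv (phi_tilde G)"

definition Psi :: "(real \<Rightarrow> real) \<Rightarrow> (real \<Rightarrow> real) \<Rightarrow> real \<Rightarrow> real" where
  "Psi F G = phi_tilde G \<circ> phi_inv (phi_tilde F)"

lemma Wf_gf: "phi_function F \<Longrightarrow> phi_function G \<Longrightarrow> gf (Wf F G)"
  unfolding Wf_def phi_inv_def by (intro gf_comp phi_tilde_gf gf_inv_gf)

lemma Psi_gf: "phi_function F \<Longrightarrow> phi_function G \<Longrightarrow> gf (Psi F G)"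
  unfolding Psi_def phi_inv_def by (intro gf_comp phi_tilde_gf gf_inv_gf)

lemma Wf_less:
  assumes F: "phi_function F" and G: "phi_function G" and x: "0 \<le> x" and m: "0 \<le> m"
  shows "Wf F G x < m \<longleftrightarrow> x < Psi F G m"
proof -
  have tF: "gf (phi_tilde F)" and tG: "gf (phi_tilde G)" using F G by (simp_all add: phi_tilde_gf)
  define a where "a = inv_into {0..} (phi_tilde G) x"
  define b where "b = inv_into {0..} (phi_tilde F) m"
  have a: "0 \<le> a" "phi_tilde G a = x" using gf_inv[OF tG x] by (auto simp: a_def)
  have b: "0 \<le> b" "phi_tilde F b = m" using gf_inv[OF tF m] by (auto simp: b_def)
  have "Wf F G x = phi_tilde F a" by (simp add: Wf_def phi_inv_def a_def)
  moreover have "Psi F G m = phi_tilde G b" by (simp add: Psi_def phi_inv_def b_def)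
  ultimately show ?thesis
    using gf_less[OF tF a(1) b(1)] gf_less[OF tG a(1) b(1)] a b by simp
qed

lemma Wf_le:
  assumes F: "phi_function F" and G: "phi_function G" and x: "0 \<le> x" and m: "0 \<le> m"
  shows "Wf F G x \<le> m \<longleftrightarrow> x \<le> Psi F G m"
proof -
  have tF: "gf (phi_tilde F)" and tG: "gf (phi_tilde G)" using F G by (simp_all add: phi_tilde_gf)
  define a where "a = inv_into {0..} (phi_tilde G) x"
  define b where "b = inv_into {0..} (phi_tilde F) m"
  have a: "0 \<le> a" "phi_tilde G a = x" using gf_inv[OF tG x] by (auto simp: a_def)
  have b: "0 \<le> b" "phi_tilde F b = m" using gf_inv[OF tF m] by (auto simp: b_def)
  have "Wf F G x = phi_tilde F a" by (simp add: Wf_def phi_inv_def a_def)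
  moreover have "Psi F G m = phi_tilde G b" by (simp add: Psi_def phi_inv_def b_def)
  ultimately show ?thesis
    using gf_le[OF tF a(1) b(1)] gf_le[OF tG a(1) b(1)] a b by simp
qed

lemma decr_rearr_antimono: "s \<le> s' \<Longrightarrow> decr_rearr f s' \<le> decr_rearr f s"
  unfolding decr_rearr_def
  by (intro Sup_subset_mono image_mono) (auto intro: order.trans[OF ennreal_leI])

lemma ext_phi_mono:
  assumes G: "gf G" and le: "a \<le> b"
  shows "ext_phi G a \<le> ext_phi G b"
proof (cases "b = \<infinity>")
  case False
  then have "a \<noteq> \<infinity>" using le by (auto simp: top_unique)
  then show ?thesis using False le gf_le[OF G]
    by (auto simp: ext_phi_def less_top intro!: ennreal_leI enn2real_mono)
qed (simp add: ext_phi_def)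

lemma ext_phi_key:
  assumes G: "gf G" and c: "0 < c" and t: "0 \<le> t"
  shows "ennreal t < ext_phi G (a / ennreal c) \<longleftrightarrow> ennreal (c * inv_into {0..} G t) < a"
proof -
  define \<tau> where "\<tau> = inv_into {0..} G t"
  have tau: "0 \<le> \<tau>" "G \<tau> = t" using gf_inv[OF G t] by (auto simp: \<tau>_def)
  show ?thesis
  proof (cases a)
    case (real r)
    have "a / ennreal c = ennreal (r / c)" using real c by (simp add: divide_ennreal)
    then have "ext_phi G (a / ennreal c) = ennreal (G (r / c))" using real c by (simp add: ext_phi_def)
    moreover have "0 \<le> G (r / c)" using gf_nonneg[OF G] real c by simp
    moreover have "t < G (r / c) \<longleftrightarrow> \<tau> < r / c" using gf_less[OF G tau(1), of "r / c"] tau real c by simp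
    moreover have "\<tau> < r / c \<longleftrightarrow> c * \<tau> < r" using c by (simp add: field_simps)
    ultimately show ?thesis using real c tau t by (simp add: ennreal_less_iff \<tau>_def[symmetric])
  next
    case top
    have "(\<infinity>::ennreal) / ennreal c = \<infinity>" using c by (simp add: ennreal_divide_eq_top_iff)
    then show ?thesis using top by (simp add: ext_phi_def)
  qed
qed

lemma ext_phi_ennreal: "gf G \<Longrightarrow> 0 < c \<Longrightarrow> ext_phi G (ennreal \<bar>x\<bar> / ennreal c) = ennreal (G (\<bar>x\<bar> / c))"
  by (simp add: divide_ennreal ext_phi_def)



lemma decr_M0:
  "emeasure lebesgue {y. 0 \<le> y \<and> \<tau> \<le> \<bar>f y\<bar>} = emeasure M0 {y \<in> space M0. \<tau> \<le> \<bar>f y\<bar>}"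
  by (subst M0_emeasure) (auto simp: space_M0)

lemma key1a:
  assumes f[measurable]: "f \<in> borel_measurable M0"
    and lt: "ennreal \<sigma> < decr_rearr f s"
  shows "ennreal s \<le> emeasure M0 {y \<in> space M0. \<sigma> < \<bar>f y\<bar>}"
proof -
  obtain \<tau> where tau: "0 \<le> \<tau>" "ennreal s \<le> emeasure lebesgue {y. 0 \<le> y \<and> \<tau> \<le> \<bar>f y\<bar>}" "ennreal \<sigma> < ennreal \<tau>"
    using lt unfolding decr_rearr_def less_Sup_iff by auto
  have st: "\<sigma> < \<tau>" using tau(3) by (metis ennreal_leI leD not_less)
  have "ennreal s \<le> emeasure M0 {y \<in> space M0. \<tau> \<le> \<bar>f y\<bar>}" using tau(2) by (simp add: decr_M0)
  also have "\<dots> \<le> emeasure M0 {y \<in> space M0. \<sigma> < \<bar>f y\<bar>}"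
    by (rule emeasure_mono) (use st in auto)
  finally show ?thesis .
qed

lemma key1b:
  assumes f[measurable]: "f \<in> borel_measurable M0" and s: "0 \<le> s" and sig: "0 \<le> \<sigma>"
    and lt: "ennreal s < emeasure M0 {y \<in> space M0. \<sigma> < \<bar>f y\<bar>}"
  shows "ennreal \<sigma> < decr_rearr f s"
proof -
  define A where "A n = {y \<in> space M0. \<sigma> + 1 / Suc n \<le> \<bar>f y\<bar>}" for n :: nat
  have AM: "range A \<subseteq> sets M0" unfolding A_def by auto
  have inc: "incseq A"
  proof (rule incseq_SucI)
    fix n
    have "1 / real (Suc (Suc n)) \<le> 1 / real (Suc n)" by (intro divide_left_mono) auto
    then show "A n \<subseteq> A (Suc n)" unfolding A_def by (auto intro: order.trans[rotated])
  qed
  have U: "(\<Union>n. A n) = {y \<in> space M0. \<sigma> < \<bar>f y\<bar>}"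
  proof
    show "(\<Union>n. A n) \<subseteq> {y \<in> space M0. \<sigma> < \<bar>f y\<bar>}"
      unfolding A_def by (auto intro: less_le_trans[rotated])
    show "{y \<in> space M0. \<sigma> < \<bar>f y\<bar>} \<subseteq> (\<Union>n. A n)"
    proof
      fix y assume y: "y \<in> {y \<in> space M0. \<sigma> < \<bar>f y\<bar>}"
      then have "0 < \<bar>f y\<bar> - \<sigma>" by simp
      then obtain n :: nat where "1 / (\<bar>f y\<bar> - \<sigma>) < real n" using reals_Archimedean2 by blast
      then have "1 / real (Suc n) \<le> \<bar>f y\<bar> - \<sigma>" using \<open>0 < \<bar>f y\<bar> - \<sigma>\<close>
        by (simp add: field_simps)
      then have "y \<in> A n" using y unfolding A_def by auto
      then show "y \<in> (\<Union>n. A n)" by blast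
    qed
  qed
  have "ennreal s < (SUP n. emeasure M0 (A n))"
    using lt SUP_emeasure_incseq[OF AM inc] U by simp
  then obtain n where n: "ennreal s < emeasure M0 (A n)" by (auto simp: less_SUP_iff)
  define \<tau> where "\<tau> = \<sigma> + 1 / Suc n"
  have "\<tau> \<in> {t. 0 \<le> t \<and> ennreal s \<le> emeasure lebesgue {y. 0 \<le> y \<and> t \<le> \<bar>f y\<bar>}}"
    using n sig unfolding \<tau>_def A_def by (auto simp: decr_M0 intro: less_imp_le)
  then have "ennreal \<tau> \<le> decr_rearr f s" unfolding decr_rearr_def by (auto intro: Sup_upper)
  moreover have "ennreal \<sigma> < ennreal \<tau>" using sig by (simp add: \<tau>_def ennreal_less_iff)
  ultimately show ?thesis by simp
qed




lemma M0_borel_set: "A \<subseteq> {0..} \<Longrightarrow> A \<in> sets borel \<Longrightarrow> A \<in> sets M0"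
  unfolding M0_def by (subst sets_restrict_space_iff) auto

lemma Rep:
  assumes F: "phi_function F" and G: "phi_function G" and f[measurable]: "f \<in> borel_measurable M0"
    and c: "0 < c"
  shows "(\<integral>\<^sup>+x\<in>{0..}. ext_phi G (decr_rearr f (phi_tilde F (phi_inv (phi_tilde G) x)) / ennreal c) \<partial>lebesgue)
       = PhiG (phiE (Psi F G)) (\<lambda>y. ennreal (G (\<bar>f y\<bar> / c)))"
proof -
  have gG: "gf G" by (rule phi_function_gf[OF G])
  have gW: "gf (Wf F G)" by (rule Wf_gf[OF F G])
  have gP: "gf (Psi F G)" by (rule Psi_gf[OF F G])
  define v where "v x = ext_phi G (decr_rearr f (Wf F G x) / ennreal c)" for x
  have Weq: "phi_tilde F (phi_inv (phi_tilde G) x) = Wf F G x" for x by (simp add: Wf_def)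
  have vanti: "v x' \<le> v x" if "0 \<le> x" "x \<le> x'" for x x'
    unfolding v_def
  proof (intro ext_phi_mono[OF gG] divide_right_mono_ennreal decr_rearr_antimono)
    show "Wf F G x \<le> Wf F G x'" using gf_le[OF gW, of x x'] that by simp
  qed
  define v' where "v' x = v (max x 0)" for x
  have "antimono v'" unfolding v'_def antimono_def by (auto intro!: vanti)
  then have "v' \<in> borel_measurable borel" by (rule antimono_borel)
  then have "v' \<in> borel_measurable M0" by (rule borel_M0)
  then have vm[measurable]: "v \<in> borel_measurable M0"
    by (rule measurable_cong[THEN iffD1, rotated]) (auto simp: v'_def space_M0 max_def)
  have "(\<integral>\<^sup>+x\<in>{0..}. ext_phi G (decr_rearr f (phi_tilde F (phi_inv (phi_tilde G) x)) / ennreal c) \<partial>lebesgue)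
      = (\<integral>\<^sup>+x. v x \<partial>M0)"
    unfolding M0_def by (subst nn_integral_restrict_space) (auto simp: v_def Weq)
  also have "\<dots> = (\<integral>\<^sup>+t. dfun v t * indicator {0..} t \<partial>lborel)"
    by (rule layer_cake[OF vm])
  also have "\<dots> = PhiG (phiE (Psi F G)) (\<lambda>y. ennreal (G (\<bar>f y\<bar> / c)))"
    unfolding PhiG_def
  proof (intro nn_integral_cong)
    fix t :: real
    show "dfun v t * indicator {0..} t = phiE (Psi F G) (dfun (\<lambda>y. ennreal (G (\<bar>f y\<bar> / c))) t) * indicator {0..} t"
    proof (cases "0 \<le> t")
      case False then show ?thesis by simp
    next
      case t: True
      define \<sigma> where "\<sigma> = c * inv_into {0..} G t"
      have sig: "0 \<le> \<sigma>" using gf_inv(1)[OF gG t] c by (simp add: \<sigma>_def)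
      define S where "S = {x \<in> space M0. ennreal t < v x}"
      have SM: "S \<in> sets M0" unfolding S_def by measurable
      have Siff: "x \<in> S \<longleftrightarrow> 0 \<le> x \<and> ennreal \<sigma> < decr_rearr f (Wf F G x)" for x
        unfolding S_def v_def \<sigma>_def using ext_phi_key[OF gG c t] by (simp add: space_M0)
      define M where "M = emeasure M0 {y \<in> space M0. \<sigma> < \<bar>f y\<bar>}"
      have dU: "dfun (\<lambda>y. ennreal (G (\<bar>f y\<bar> / c))) t = M"
      proof -
        have "ennreal t < ennreal (G (\<bar>f y\<bar> / c)) \<longleftrightarrow> \<sigma> < \<bar>f y\<bar>" for y
          using ext_phi_key[OF gG c t, of "ennreal \<bar>f y\<bar>"] ext_phi_ennreal[OF gG c, of "f y"] sig
          by (simp add: \<sigma>_def ennreal_less_iff)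
        then show ?thesis by (simp add: dfun_def M_def)
      qed
      have lower: "x \<in> S" if "0 \<le> x" "ennreal (Wf F G x) < M" for x
        using Siff key1b[OF f gf_nonneg[OF gW that(1)] sig] that by (simp add: M_def)
      have upper: "ennreal (Wf F G x) \<le> M" if "x \<in> S" for x
        using Siff key1a[OF f] that by (simp add: M_def)
      have "dfun v t = emeasure M0 S" by (simp add: dfun_def S_def)
      also have "\<dots> = phiE (Psi F G) M"
      proof (cases M)
        case top
        then have "S = {0..}" using lower Siff by auto
        then show ?thesis using top by (simp add: M0_all phiE_def)
      next
        case (real \<mu>)
        have P0: "0 \<le> Psi F G \<mu>" using gf_nonneg[OF gP real(1)] .
        have sub1: "{0..<Psi F G \<mu>} \<subseteq> S"
        proof
          fix x assume x: "x \<in> {0..<Psi F G \<mu>}"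
          then have "Wf F G x < \<mu>" using Wf_less[OF F G _ real(1)] by auto
          then have "ennreal (Wf F G x) < ennreal \<mu>"
            using gf_nonneg[OF gW, of x] x by (simp add: ennreal_less_iff)
          then show "x \<in> S" using lower x real(2) by auto
        qed
        have sub2: "S \<subseteq> {0..Psi F G \<mu>}"
        proof
          fix x assume x: "x \<in> S"
          then have "ennreal (Wf F G x) \<le> ennreal \<mu>" using upper real(2) by simp
          then have "Wf F G x \<le> \<mu>" using real(1) by (simp add: ennreal_le_iff)
          moreover have "0 \<le> x" using x Siff by simp
          ultimately show "x \<in> {0..Psi F G \<mu>}" using Wf_le[OF F G _ real(1)] by auto
        qed
        have "ennreal (Psi F G \<mu>) \<le> emeasure M0 S"
          using emeasure_mono[OF sub1 SM] M0_Ico[OF P0] by simp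
        moreover have "emeasure M0 S \<le> ennreal (Psi F G \<mu>)"
          using emeasure_mono[OF sub2 M0_borel_set] M0_Icc[OF P0] by auto
        ultimately show ?thesis using real by (simp add: phiE_def)
      qed
      finally show ?thesis using dU by simp
    qed
  qed
  finally show ?thesis .
qed




definition Jn :: "(real \<Rightarrow> real) \<Rightarrow> (real \<Rightarrow> real) \<Rightarrow> (real \<Rightarrow> real) \<Rightarrow> real \<Rightarrow> ennreal" where
  "Jn F G f c = (\<integral>\<^sup>+x\<in>{0..}. ext_phi G (decr_rearr f (phi_tilde F (phi_inv (phi_tilde G) x)) / ennreal c) \<partial>lebesgue)"

lemma OL_norm_Jn: "OL_norm F G f = Inf (ennreal ` {c. 0 < c \<and> Jn F G f c \<le> 1})"
  by (simp add: OL_norm_def luxemburg_def Jn_def)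

lemma LA: "0 < c \<Longrightarrow> Jn F G f c \<le> 1 \<Longrightarrow> OL_norm F G f \<le> ennreal c"
  unfolding OL_norm_Jn by (rule Inf_lower) auto

lemma LC: "0 < c \<Longrightarrow> ennreal c < OL_norm F G f \<Longrightarrow> 1 < Jn F G f c"
  using LA[of c F G f] by (auto simp: not_le[symmetric])

lemma meas_gf:
  assumes H: "gf H" and e: "e \<in> borel_measurable M0" and e0: "\<And>y. 0 \<le> e y"
  shows "(\<lambda>y. ennreal (H (e y))) \<in> borel_measurable M0"
proof -
  define H' where "H' t = H (max t 0)" for t
  have "mono H'" unfolding H'_def by (intro monoI) (auto simp: gf_le[OF H])
  then have "H' \<in> borel_measurable borel" by (rule borel_measurable_mono)
  then have "(\<lambda>y. ennreal (H' (e y))) \<in> borel_measurable M0"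
    using e by measurable
  moreover have "H' (e y) = H (e y)" for y using e0[of y] by (simp add: H'_def)
  ultimately show ?thesis by simp
qed

lemma Jn_Rep:
  assumes F: "phi_function F" and G: "phi_function G" and f: "f \<in> borel_measurable M0" and c: "0 < c"
  shows "Jn F G f c = PhiG (phiE (Psi F G)) (\<lambda>y. ennreal (G (\<bar>f y\<bar> / c)))"
  unfolding Jn_def by (rule Rep[OF F G f c])

lemma LB:
  assumes F: "phi_function F" and G: "phi_function G" and f[measurable]: "f \<in> borel_measurable M0"
    and c: "0 < c" and lt: "OL_norm F G f < ennreal c"
  shows "Jn F G f c \<le> 1"
proof -
  have gG: "gf G" by (rule phi_function_gf[OF G])
  obtain c' where c': "0 < c'" "Jn F G f c' \<le> 1" "ennreal c' < ennreal c"
    using lt unfolding OL_norm_Jn Inf_less_iff by auto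
  have cc: "c' < c" using c'(3) by (metis ennreal_leI leD not_less)
  have "Jn F G f c = PhiG (phiE (Psi F G)) (\<lambda>y. ennreal (G (\<bar>f y\<bar> / c)))" by (rule Jn_Rep[OF F G f c])
  also have "\<dots> \<le> PhiG (phiE (Psi F G)) (\<lambda>y. ennreal (G (\<bar>f y\<bar> / c')))"
  proof (rule PhiG_mono)
    show "(\<lambda>y. ennreal (G (\<bar>f y\<bar> / c'))) \<in> borel_measurable M0"
      by (rule meas_gf[OF gG]) (use c' in auto)
    show "mono (phiE (Psi F G))" by (rule phiE_mono[OF gf_phiA[OF Psi_gf[OF F G]]])
    fix y :: real
    have "\<bar>f y\<bar> / c \<le> \<bar>f y\<bar> / c'" using c' cc by (intro divide_left_mono) auto
    then show "ennreal (G (\<bar>f y\<bar> / c)) \<le> ennreal (G (\<bar>f y\<bar> / c'))"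
      using gf_le[OF gG] c c' by (auto intro!: ennreal_leI)
  qed
  also have "\<dots> = Jn F G f c'" by (rule Jn_Rep[OF F G f c'(1), symmetric])
  finally show ?thesis using c'(2) by simp
qed

lemma OL_zero:
  assumes F: "phi_function F" and G: "phi_function G"
  shows "OL_norm F G (\<lambda>x. 0) = 0"
proof -
  have gG: "gf G" by (rule phi_function_gf[OF G])
  have "OL_norm F G (\<lambda>x. 0) \<le> 0 + ennreal e" if e: "0 < e" for e
  proof -
    have "Jn F G (\<lambda>x. 0) e = PhiG (phiE (Psi F G)) (\<lambda>y. ennreal (G (\<bar>0\<bar> / e)))"
      by (rule Jn_Rep[OF F G _ e]) simp
    also have "\<dots> = 0" using PhiG_zero[OF gf_phiA[OF Psi_gf[OF F G]]] gf_0[OF gG] by simp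
    finally show ?thesis using LA[OF e, of F G "\<lambda>x. 0"] by simp
  qed
  then have "OL_norm F G (\<lambda>x. 0) \<le> 0" by (rule ennreal_le_epsilon) auto
  then show ?thesis by simp
qed



lemma meas_comb:
  fixes f :: "nat \<Rightarrow> real \<Rightarrow> real" and n :: nat
  assumes "\<And>i. i < n \<Longrightarrow> f i \<in> borel_measurable M0"
  shows "(\<lambda>x. (\<Sum>i<n. \<bar>f i x\<bar> powr p) powr (1 / p)) \<in> borel_measurable M0"
proof -
  have m: "(\<lambda>x. \<bar>f i x\<bar> powr p) \<in> borel_measurable M0" if "i \<in> {..<n}" for i
  proof -
    have [measurable]: "f i \<in> borel_measurable M0" using assms that by auto
    show ?thesis by measurable
  qed
  have "(\<lambda>x. \<Sum>i<n. \<bar>f i x\<bar> powr p) \<in> borel_measurable M0"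
    by (rule borel_measurable_sum) (rule m)
  then show ?thesis by measurable
qed

lemma part1_eps:
  fixes f :: "nat \<Rightarrow> real \<Rightarrow> real" and n :: nat and b :: "nat \<Rightarrow> real"
  assumes F: "phi_function F" and G: "phi_function G" and p: "0 < p"
    and H: "phi_function H" and Hc: "convex_on {0..} H" and c0: "0 < c0"
    and eq: "\<And>t. 0 \<le> t \<Longrightarrow> G ((t / c0) powr (1 / p)) \<le> H t \<and> H t \<le> G ((c0 * t) powr (1 / p))"
    and conc: "concave_on {0..} (Psi F G)"
    and n: "0 < n" and fm: "\<And>i. i < n \<Longrightarrow> f i \<in> borel_measurable M0"
    and b: "\<And>i. i < n \<Longrightarrow> 0 < b i" and lt: "\<And>i. i < n \<Longrightarrow> OL_norm F G (f i) < ennreal (b i)"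
  shows "OL_norm F G (\<lambda>x. (\<Sum>i<n. \<bar>f i x\<bar> powr p) powr (1 / p))
          \<le> ennreal (c0 powr (2 / p) * (\<Sum>i<n. b i powr p) powr (1 / p))"
proof -
  have gG: "gf G" and gH: "gf H" using G H by (simp_all add: phi_function_gf)
  have pA: "phiA (Psi F G)" by (rule gf_phiA[OF Psi_gf[OF F G]])
  define g where "g x = (\<Sum>i<n. \<bar>f i x\<bar> powr p) powr (1 / p)" for x
  define A where "A = (\<Sum>i<n. b i powr p)"
  have bp: "0 < b i powr p" if "i < n" for i using b[OF that] by simp
  have A: "0 < A" unfolding A_def using n bp by (intro sum_pos) auto
  define lam where "lam i = b i powr p / A" for i
  have lam0: "0 < lam i" if "i < n" for i using b[OF that] A by (simp add: lam_def)
  have lam1: "(\<Sum>i<n. lam i) = 1" using A by (simp add: lam_def A_def sum_divide_distrib[symmetric])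
  define hf where "hf i y = (\<bar>f i y\<bar> / b i) powr p / c0" for i y
  have hf0: "0 \<le> hf i y" for i y using c0 by (simp add: hf_def)
  define c where "c = c0 powr (2 / p) * A powr (1 / p)"
  have c: "0 < c" using c0 A by (simp add: c_def)
  have gm[measurable]: "g \<in> borel_measurable M0" unfolding g_def by (rule meas_comb[OF fm])
  have hfm: "(\<lambda>y. ennreal (H (hf i y))) \<in> borel_measurable M0" if "i < n" for i
    by (rule meas_gf[OF gH]) (use fm[OF that] hf0 in \<open>auto simp: hf_def\<close>)
  have ptw: "ennreal (G (\<bar>g y\<bar> / c)) \<le> (\<Sum>i<n. ennreal (lam i) * ennreal (H (hf i y)))" for y
  proof -
    define S where "S = (\<Sum>i<n. \<bar>f i y\<bar> powr p)"
    have S0: "0 \<le> S" by (simp add: S_def sum_nonneg)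
    have gy: "\<bar>g y\<bar> = S powr (1 / p)" by (simp add: g_def S_def)
    define t where "t = S / (A * c0)"
    have t0: "0 \<le> t" using S0 A c0 by (simp add: t_def)
    have "\<bar>g y\<bar> / c = (t / c0) powr (1 / p)"
    proof -
      have "(t / c0) powr (1 / p) = (S / (A * (c0 * c0))) powr (1 / p)" by (simp add: t_def field_simps)
      also have "\<dots> = S powr (1 / p) / (A powr (1 / p) * (c0 * c0) powr (1 / p))"
        using S0 A c0 by (simp add: powr_divide powr_mult)
      also have "(c0 * c0) powr (1 / p) = c0 powr (2 / p)"
      proof -
        have "(c0 * c0) powr (1 / p) = c0 powr (1 / p) * c0 powr (1 / p)" using c0 by (metis powr_mult less_imp_le)
        also have "\<dots> = c0 powr (1 / p + 1 / p)" by (rule powr_add[symmetric])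
        also have "1 / p + 1 / p = 2 / p" by simp
        finally show ?thesis .
      qed
      finally show ?thesis by (simp add: gy c_def mult.commute)
    qed
    then have "G (\<bar>g y\<bar> / c) \<le> H t" using eq[OF t0] by simp
    also have "t = (\<Sum>i<n. lam i * hf i y)"
    proof -
      have "lam i * hf i y = \<bar>f i y\<bar> powr p / (A * c0)" if "i < n" for i
        using b[OF that] A c0 by (simp add: lam_def hf_def powr_divide field_simps)
      then have "(\<Sum>i<n. lam i * hf i y) = (\<Sum>i<n. \<bar>f i y\<bar> powr p / (A * c0))" by simp
      also have "\<dots> = t" by (simp add: t_def S_def sum_divide_distrib)
      finally show ?thesis by simp
    qed
    also have "H (\<Sum>i<n. lam i * hf i y) \<le> (\<Sum>i<n. lam i * H (hf i y))"
      using convex_on_sum[OF _ _ Hc, of "{..<n}" lam "\<lambda>i. hf i y"] n lam0 lam1 hf0 by (auto simp: less_imp_le)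
    finally have "G (\<bar>g y\<bar> / c) \<le> (\<Sum>i<n. lam i * H (hf i y))" .
    then have "ennreal (G (\<bar>g y\<bar> / c)) \<le> ennreal (\<Sum>i<n. lam i * H (hf i y))" by (rule ennreal_leI)
    also have "\<dots> = (\<Sum>i<n. ennreal (lam i) * ennreal (H (hf i y)))"
      using lam0 gf_nonneg[OF gH hf0] by (subst sum_ennreal[symmetric]) (auto simp: ennreal_mult less_imp_le)
    finally show ?thesis .
  qed
  have each: "PhiG (phiE (Psi F G)) (\<lambda>y. ennreal (H (hf i y))) \<le> 1" if i: "i < n" for i
  proof -
    have "PhiG (phiE (Psi F G)) (\<lambda>y. ennreal (H (hf i y))) \<le> PhiG (phiE (Psi F G)) (\<lambda>y. ennreal (G (\<bar>f i y\<bar> / b i)))"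
    proof (rule PhiG_mono[OF _ phiE_mono[OF pA]])
      show "(\<lambda>y. ennreal (G (\<bar>f i y\<bar> / b i))) \<in> borel_measurable M0"
        by (rule meas_gf[OF gG]) (use fm[OF i] b[OF i] in auto)
      fix y :: real
      have "(c0 * hf i y) powr (1 / p) = \<bar>f i y\<bar> / b i"
        using c0 p b[OF i] by (simp add: hf_def powr_powr)
      then show "ennreal (H (hf i y)) \<le> ennreal (G (\<bar>f i y\<bar> / b i))"
        using eq[OF hf0[of i y]] by (auto intro: ennreal_leI)
    qed
    also have "\<dots> = Jn F G (f i) (b i)" by (rule Jn_Rep[OF F G fm[OF i] b[OF i], symmetric])
    also have "\<dots> \<le> 1" by (rule LB[OF F G fm[OF i] b[OF i] lt[OF i]])
    finally show ?thesis .
  qed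
  have "Jn F G g c = PhiG (phiE (Psi F G)) (\<lambda>y. ennreal (G (\<bar>g y\<bar> / c)))" by (rule Jn_Rep[OF F G gm c])
  also have "\<dots> \<le> PhiG (phiE (Psi F G)) (\<lambda>y. \<Sum>i<n. ennreal (lam i) * ennreal (H (hf i y)))"
    by (rule PhiG_mono[OF _ phiE_mono[OF pA] ptw]) (use hfm in auto)
  also have "\<dots> \<le> (\<Sum>i<n. PhiG (phiE (Psi F G)) (\<lambda>y. ennreal (lam i) * ennreal (H (hf i y))))"
    by (rule Phi_cave_sum[OF pA conc]) (use hfm in auto)
  also have "\<dots> = (\<Sum>i<n. ennreal (lam i) * PhiG (phiE (Psi F G)) (\<lambda>y. ennreal (H (hf i y))))"
    by (intro sum.cong refl PhiG_scale hfm phiE_mono[OF pA] lam0) auto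
  also have "\<dots> \<le> (\<Sum>i<n. ennreal (lam i) * 1)"
    by (intro sum_mono mult_left_mono each) auto
  also have "\<dots> = ennreal (\<Sum>i<n. lam i)"
    using lam0 by (simp, intro sum_ennreal) (auto simp: less_imp_le)
  also have "\<dots> = 1" using lam1 by simp
  finally have "Jn F G g c \<le> 1" .
  then have "OL_norm F G g \<le> ennreal c" by (rule LA[OF c])
  then show ?thesis by (simp add: g_def[abs_def] c_def A_def)
qed




lemma strict_avg:
  fixes lam :: "nat \<Rightarrow> real" and X :: "nat \<Rightarrow> ennreal"
  assumes fin: "finite I" and ne: "I \<noteq> {}" and lam: "\<And>i. i \<in> I \<Longrightarrow> 0 < lam i"
    and s1: "(\<Sum>i\<in>I. lam i) = 1" and X: "\<And>i. i \<in> I \<Longrightarrow> 1 < X i"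
  shows "1 < (\<Sum>i\<in>I. ennreal (lam i) * X i)"
proof (cases "\<exists>i\<in>I. X i = \<infinity>")
  case True
  then obtain j where j: "j \<in> I" "X j = \<infinity>" by blast
  have "ennreal (lam j) * X j \<le> (\<Sum>i\<in>I. ennreal (lam i) * X i)"
    by (rule member_le_sum[OF j(1)]) (use fin in auto)
  moreover have "ennreal (lam j) * X j = \<infinity>" using j lam[OF j(1)] by (simp add: ennreal_mult_top)
  ultimately show ?thesis by (simp add: top_unique)
next
  case False
  define x where "x i = enn2real (X i)" for i
  have Xx: "X i = ennreal (x i)" if "i \<in> I" for i using False that by (auto simp: x_def less_top)
  have x1: "1 < x i" if "i \<in> I" for i
  proof -
    have "ennreal 1 < ennreal (x i)" using X[OF that] Xx[OF that] by simp
    then show ?thesis by (subst (asm) ennreal_less_iff) auto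
  qed
  have "(\<Sum>i\<in>I. ennreal (lam i) * X i) = (\<Sum>i\<in>I. ennreal (lam i * x i))"
  proof (intro sum.cong refl)
    fix i assume i: "i \<in> I"
    have "0 \<le> lam i" "0 \<le> x i" using lam[OF i] x1[OF i] by auto
    then show "ennreal (lam i) * X i = ennreal (lam i * x i)" using Xx[OF i] by (simp add: ennreal_mult)
  qed
  also have "\<dots> = ennreal (\<Sum>i\<in>I. lam i * x i)"
  proof (rule sum_ennreal)
    fix i assume i: "i \<in> I"
    show "0 \<le> lam i * x i" using lam[OF i] x1[OF i] by simp
  qed
  finally have eq: "(\<Sum>i\<in>I. ennreal (lam i) * X i) = ennreal (\<Sum>i\<in>I. lam i * x i)" .
  have "(\<Sum>i\<in>I. lam i * 1) < (\<Sum>i\<in>I. lam i * x i)"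
    by (rule sum_strict_mono[OF fin ne]) (use lam x1 in auto)
  then have "1 < (\<Sum>i\<in>I. lam i * x i)" using s1 by simp
  then have "ennreal 1 < ennreal (\<Sum>i\<in>I. lam i * x i)" by (subst ennreal_less_iff) auto
  then show ?thesis unfolding eq by simp
qed




lemma part2_core:
  fixes f :: "nat \<Rightarrow> real \<Rightarrow> real" and n :: nat
  assumes F: "phi_function F" and G: "phi_function G" and q: "0 < q"
    and H: "phi_function H" and Hc: "concave_on {0..} H" and c0: "0 < c0"
    and eq: "\<And>t. 0 \<le> t \<Longrightarrow> G ((t / c0) powr (1 / q)) \<le> H t \<and> H t \<le> G ((c0 * t) powr (1 / q))"
    and conv: "convex_on {0..} (Psi F G)"
    and fm: "\<And>i. i < n \<Longrightarrow> f i \<in> borel_measurable M0"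
    and fin: "\<And>i. i < n \<Longrightarrow> OL_norm F G (f i) < \<infinity>"
  shows "ennreal ((1 / c0 powr (2 / q)) * (\<Sum>i<n. enn2real (OL_norm F G (f i)) powr q) powr (1 / q))
          \<le> OL_norm F G (\<lambda>x. (\<Sum>i<n. \<bar>f i x\<bar> powr q) powr (1 / q))"
proof -
  have gG: "gf G" and gH: "gf H" using G H by (simp_all add: phi_function_gf)
  have pA: "phiA (Psi F G)" by (rule gf_phiA[OF Psi_gf[OF F G]])
  define a where "a i = enn2real (OL_norm F G (f i))" for i
  have a0: "0 \<le> a i" for i by (simp add: a_def)
  have Na: "OL_norm F G (f i) = ennreal (a i)" if "i < n" for i
    using fin[OF that] by (simp add: a_def less_top)
  define A where "A = (\<Sum>i<n. a i powr q)"
  define g where "g x = (\<Sum>i<n. \<bar>f i x\<bar> powr q) powr (1 / q)" for x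
  define K where "K = c0 powr (2 / q)"
  have K: "0 < K" using c0 by (simp add: K_def)
  have gm[measurable]: "g \<in> borel_measurable M0" unfolding g_def by (rule meas_comb[OF fm])
  show ?thesis
  proof (cases "A = 0")
    case True
    then show ?thesis by (simp add: A_def a_def)
  next
    case False
    then have A: "0 < A" using a0 by (simp add: A_def sum_nonneg less_le)
    define T where "T = A powr (1 / q) / K"
    have T: "0 < T" using A K by (simp add: T_def)
    show ?thesis
    proof (rule ccontr)
      assume "\<not> ?thesis"
      then have lt: "OL_norm F G g < ennreal T" by (simp add: g_def[abs_def] T_def A_def a_def K_def not_le)
      obtain z where z: "OL_norm F G g < z" "z < ennreal T" using dense[OF lt] by blast
      obtain c where cz: "z = ennreal c" "0 \<le> c" using z(2) by (cases z) (auto simp: top_unique)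
      have c: "0 < c" using z(1) cz by (auto simp: ennreal_neg intro: ccontr)
      have cT: "c < T" using z(2) cz by (simp add: ennreal_less_iff)
      have Jg: "Jn F G g c \<le> 1" by (rule LB[OF F G gm c]) (use z cz in simp)
      define I where "I = {i \<in> {..<n}. 0 < a i}"
      have finI: "finite I" by (simp add: I_def)
      have AI: "A = (\<Sum>i\<in>I. a i powr q)"
        unfolding A_def I_def
      proof (rule sum.mono_neutral_right)
        show "\<forall>i\<in>{..<n} - {i \<in> {..<n}. 0 < a i}. a i powr q = 0" using a0 by (auto simp: le_less)
      qed auto
      have neI: "I \<noteq> {}" using A AI by auto
      define lam where "lam i = a i powr q / A" for i
      have lam0: "0 < lam i" if "i \<in> I" for i using that A by (simp add: lam_def I_def)
      have lam1: "(\<Sum>i\<in>I. lam i) = 1" using A by (simp add: lam_def AI sum_divide_distrib[symmetric])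
      define k where "k i y = \<bar>f i y\<bar> powr q / (lam i * c powr q * c0)" for i y
      have k0: "0 \<le> k i y" if "i \<in> I" for i y using lam0[OF that] c c0 by (simp add: k_def)
      define beta where "beta i = (lam i * c powr q * (c0 * c0)) powr (1 / q)" for i
      have cq: "c powr q < A / (c0 * c0)"
      proof -
        have "c powr q < T powr q" using c cT q by (simp add: powr_less_mono2)
        also have "T powr q = A / (c0 * c0)"
        proof -
          have "T powr q = (A powr (1 / q)) powr q / K powr q" using A K by (simp add: T_def powr_divide)
          also have "(A powr (1 / q)) powr q = A" using A q by (simp add: powr_powr)
          also have "K powr q = c0 * c0" using c0 q by (simp add: K_def powr_powr powr_numeral power2_eq_square)
          finally show ?thesis .
        qed
        finally show ?thesis .
      qed
      have beta: "0 < beta i" "beta i < a i" if i: "i \<in> I" for i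
      proof -
        show "0 < beta i" using lam0[OF i] c c0 by (simp add: beta_def)
        have "lam i * c powr q * (c0 * c0) < lam i * (A / (c0 * c0)) * (c0 * c0)"
        proof -
          have "c powr q * (c0 * c0) < A" using cq c0 by (simp add: pos_less_divide_eq)
          moreover have "A / (c0 * c0) * (c0 * c0) = A" using c0 by simp
          ultimately have X: "c powr q * (c0 * c0) < A / (c0 * c0) * (c0 * c0)" by simp
          have "lam i * (c powr q * (c0 * c0)) < lam i * (A / (c0 * c0) * (c0 * c0))"
            by (rule mult_strict_left_mono[OF X lam0[OF i]])
          then show ?thesis by (simp only: mult.assoc)
        qed
        also have "\<dots> = a i powr q" using A c0 by (simp add: lam_def)
        finally have "(lam i * c powr q * (c0 * c0)) powr (1 / q) < (a i powr q) powr (1 / q)"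
          using lam0[OF i] c c0 q by (intro powr_less_mono2) auto
        also have "(a i powr q) powr (1 / q) = a i" using a0[of i] q by (simp add: powr_powr)
        finally show "beta i < a i" by (simp add: beta_def)
      qed
      have Hkm: "(\<lambda>y. ennreal (H (k i y))) \<in> borel_measurable M0" if i: "i \<in> I" for i
        by (rule meas_gf[OF gH]) (use fm k0[OF i] i in \<open>auto simp: k_def I_def\<close>)
      have ptw: "(\<Sum>i\<in>I. ennreal (lam i) * ennreal (H (k i y))) \<le> ennreal (G (\<bar>g y\<bar> / c))" for y
      proof -
        define S where "S = (\<Sum>i<n. \<bar>f i y\<bar> powr q)"
        have S0: "0 \<le> S" by (simp add: S_def sum_nonneg)
        define t where "t = S / (c powr q * c0)"
        have t0: "0 \<le> t" using S0 c c0 by (simp add: t_def)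
        have "\<bar>g y\<bar> / c = (c0 * t) powr (1 / q)"
        proof -
          have "(c0 * t) powr (1 / q) = (S / c powr q) powr (1 / q)" using c0 by (simp add: t_def)
          also have "\<dots> = S powr (1 / q) / (c powr q) powr (1 / q)" using S0 c by (simp add: powr_divide)
          also have "(c powr q) powr (1 / q) = c" using c q by (simp add: powr_powr)
          finally show ?thesis by (simp add: g_def S_def)
        qed
        then have Gt: "H t \<le> G (\<bar>g y\<bar> / c)" using eq[OF t0] by simp
        have "(\<Sum>i\<in>I. lam i * k i y) \<le> t"
        proof -
          have "(\<Sum>i\<in>I. lam i * k i y) = (\<Sum>i\<in>I. \<bar>f i y\<bar> powr q / (c powr q * c0))"
          proof (intro sum.cong refl)
            fix i assume i: "i \<in> I"
            show "lam i * k i y = \<bar>f i y\<bar> powr q / (c powr q * c0)"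
              using lam0[OF i] c c0 by (simp add: k_def field_simps)
          qed
          also have "\<dots> \<le> (\<Sum>i<n. \<bar>f i y\<bar> powr q / (c powr q * c0))"
            by (rule sum_mono2) (use c c0 in \<open>auto simp: I_def\<close>)
          also have "\<dots> = t" by (simp add: t_def S_def sum_divide_distrib)
          finally show ?thesis .
        qed
        then have "H (\<Sum>i\<in>I. lam i * k i y) \<le> H t"
          using gf_le[OF gH] t0 lam0 k0 by (simp add: sum_nonneg less_imp_le)
        moreover have "(\<Sum>i\<in>I. lam i * H (k i y)) \<le> H (\<Sum>i\<in>I. lam i * k i y)"
          using concave_on_sum[OF finI neI Hc, of lam "\<lambda>i. k i y"] lam0 lam1 k0 by (auto simp: less_imp_le)
        ultimately have "(\<Sum>i\<in>I. lam i * H (k i y)) \<le> G (\<bar>g y\<bar> / c)" using Gt by linarith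
        then have "ennreal (\<Sum>i\<in>I. lam i * H (k i y)) \<le> ennreal (G (\<bar>g y\<bar> / c))" by (rule ennreal_leI)
        moreover have "ennreal (\<Sum>i\<in>I. lam i * H (k i y)) = (\<Sum>i\<in>I. ennreal (lam i) * ennreal (H (k i y)))"
        proof -
          have "ennreal (\<Sum>i\<in>I. lam i * H (k i y)) = (\<Sum>i\<in>I. ennreal (lam i * H (k i y)))"
          proof (rule sum_ennreal[symmetric])
            fix i assume i: "i \<in> I"
            show "0 \<le> lam i * H (k i y)" using lam0[OF i] gf_nonneg[OF gH k0[OF i]] by simp
          qed
          also have "\<dots> = (\<Sum>i\<in>I. ennreal (lam i) * ennreal (H (k i y)))"
          proof (intro sum.cong refl)
            fix i assume i: "i \<in> I"
            show "ennreal (lam i * H (k i y)) = ennreal (lam i) * ennreal (H (k i y))"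
              using lam0[OF i] gf_nonneg[OF gH k0[OF i]] by (simp add: ennreal_mult)
          qed
          finally show ?thesis .
        qed
        ultimately show ?thesis by simp
      qed
      have each: "1 < PhiG (phiE (Psi F G)) (\<lambda>y. ennreal (H (k i y)))" if i: "i \<in> I" for i
      proof -
        have iN: "i < n" using i by (simp add: I_def)
        have "1 < Jn F G (f i) (beta i)"
          by (rule LC[OF beta(1)[OF i]]) (use Na[OF iN] beta(2)[OF i] beta(1)[OF i] in \<open>simp add: ennreal_less_iff\<close>)
        also have "Jn F G (f i) (beta i) = PhiG (phiE (Psi F G)) (\<lambda>y. ennreal (G (\<bar>f i y\<bar> / beta i)))"
          by (rule Jn_Rep[OF F G fm[OF iN] beta(1)[OF i]])
        also have "\<dots> \<le> PhiG (phiE (Psi F G)) (\<lambda>y. ennreal (H (k i y)))"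
        proof (rule PhiG_mono[OF Hkm[OF i] phiE_mono[OF pA]])
          fix y :: real
          have "(k i y / c0) powr (1 / q) = \<bar>f i y\<bar> / beta i"
          proof -
            have "k i y / c0 = \<bar>f i y\<bar> powr q / (lam i * c powr q * (c0 * c0))"
              by (simp add: k_def field_simps)
            then have "(k i y / c0) powr (1 / q) = (\<bar>f i y\<bar> powr q) powr (1 / q) / beta i"
              using lam0[OF i] c c0 by (simp add: powr_divide beta_def)
            also have "(\<bar>f i y\<bar> powr q) powr (1 / q) = \<bar>f i y\<bar>" using q by (simp add: powr_powr)
            finally show ?thesis .
          qed
          then show "ennreal (G (\<bar>f i y\<bar> / beta i)) \<le> ennreal (H (k i y))"
            using eq[OF k0[OF i, of y]] by (auto intro: ennreal_leI)
        qed
        finally show ?thesis .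
      qed
      have "1 < (\<Sum>i\<in>I. ennreal (lam i) * PhiG (phiE (Psi F G)) (\<lambda>y. ennreal (H (k i y))))"
        by (rule strict_avg[OF finI neI lam0 lam1 each])
      also have "\<dots> = (\<Sum>i\<in>I. PhiG (phiE (Psi F G)) (\<lambda>y. ennreal (lam i) * ennreal (H (k i y))))"
        by (intro sum.cong refl PhiG_scale[symmetric] Hkm phiE_mono[OF pA] lam0)
      also have "\<dots> \<le> PhiG (phiE (Psi F G)) (\<lambda>y. \<Sum>i\<in>I. ennreal (lam i) * ennreal (H (k i y)))"
        by (rule Phi_vex_sum[OF pA conv finI]) (use Hkm in auto)
      also have "\<dots> \<le> PhiG (phiE (Psi F G)) (\<lambda>y. ennreal (G (\<bar>g y\<bar> / c)))"
        by (rule PhiG_mono[OF _ phiE_mono[OF pA] ptw]) (rule meas_gf[OF gG], use c in auto)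
      also have "\<dots> = Jn F G g c" by (rule Jn_Rep[OF F G gm c, symmetric])
      finally show False using Jg by simp
    qed
  qed
qed




lemma OL_space_M0: "f \<in> OL_space F G \<Longrightarrow> f \<in> borel_measurable M0"
  by (simp add: OL_space_def M0_def)

lemma OL_space_fin: "f \<in> OL_space F G \<Longrightarrow> OL_norm F G f < \<infinity>"
  by (simp add: OL_space_def)

lemma part1:
  assumes F: "phi_function F" and G: "phi_function G" and p: "0 < p"
    and H: "phi_function H" and Hc: "convex_on {0..} H"
    and Heq: "phi_equiv (G \<circ> (\<lambda>t. t powr (1 / p))) H"
    and conc: "concave_on {0..} (phi_tilde G \<circ> phi_inv (phi_tilde F))"
  shows "p_convex (OL_space F G) (OL_norm F G) p"
proof -
  obtain c0 where c0: "0 < c0" and eq0: "\<And>t. 0 \<le> t \<Longrightarrow> G ((t / c0) powr (1 / p)) \<le> H t \<and> H t \<le> G ((c0 * t) powr (1 / p))"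
    using Heq unfolding phi_equiv_def by auto
  have concP: "concave_on {0..} (Psi F G)" using conc by (simp add: Psi_def)
  define C where "C = c0 powr (2 / p)"
  have C: "0 < C" using c0 by (simp add: C_def)
  show ?thesis unfolding p_convex_def
  proof (intro exI[of _ C] conjI allI impI C)
    fix n :: nat and f :: "nat \<Rightarrow> real \<Rightarrow> real"
    assume X: "\<forall>i<n. f i \<in> OL_space F G"
    have fm: "\<And>i. i < n \<Longrightarrow> f i \<in> borel_measurable M0" using X OL_space_M0 by blast
    have fin: "\<And>i. i < n \<Longrightarrow> OL_norm F G (f i) < \<infinity>" using X OL_space_fin by blast
    define a where "a i = enn2real (OL_norm F G (f i))" for i
    have Na: "OL_norm F G (f i) = ennreal (a i)" if "i < n" for i
      using fin[OF that] by (simp add: a_def less_top)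
    show "OL_norm F G (\<lambda>x. (\<Sum>i<n. \<bar>f i x\<bar> powr p) powr (1 / p))
          \<le> ennreal (C * (\<Sum>i<n. enn2real (OL_norm F G (f i)) powr p) powr (1 / p))"
    proof (cases "n = 0")
      case True
      then show ?thesis using OL_zero[OF F G] by simp
    next
      case False
      then have n: "0 < n" by simp
      define r where "r k = C * (\<Sum>i<n. (a i + 1 / real (Suc k)) powr p) powr (1 / p)" for k
      have bound: "OL_norm F G (\<lambda>x. (\<Sum>i<n. \<bar>f i x\<bar> powr p) powr (1 / p)) \<le> ennreal (r k)" for k
        unfolding r_def C_def
      proof (rule part1_eps[OF F G p H Hc c0 eq0 concP n fm])
        fix i assume i: "i < n"
        show "0 < a i + 1 / real (Suc k)" using a_def by (simp add: add_nonneg_pos)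
        have "ennreal (a i) < ennreal (a i + 1 / real (Suc k))"
          by (rule ennreal_lessI) (auto simp: a_def add_nonneg_pos)
        then show "OL_norm F G (f i) < ennreal (a i + 1 / real (Suc k))"
          using Na[OF i] by simp
      qed
      have e0: "(\<lambda>k. 1 / real (Suc k)) \<longlonglongrightarrow> 0"
        using LIMSEQ_Suc[OF lim_const_over_n[of 1]] by simp
      have lim: "r \<longlonglongrightarrow> C * (\<Sum>i<n. a i powr p) powr (1 / p)"
        unfolding r_def
      proof (intro tendsto_mult tendsto_const tendsto_powr' tendsto_sum)
        show "(\<lambda>k. a i + 1 / real (Suc k)) \<longlonglongrightarrow> a i" for i
          using tendsto_add[OF tendsto_const e0, of "a i"] by simp
        show "a i \<noteq> 0 \<or> 0 < p \<and> (\<forall>\<^sub>F k in sequentially. 0 \<le> a i + 1 / real (Suc k))" for i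
          using p by (auto simp: a_def)
        show "(\<Sum>i<n. a i powr p) \<noteq> 0 \<or> 0 < 1 / p \<and> (\<forall>\<^sub>F k in sequentially. 0 \<le> (\<Sum>i<n. (a i + 1 / real (Suc k)) powr p))"
          using p by (auto intro!: always_eventually sum_nonneg)
      qed
      have "OL_norm F G (\<lambda>x. (\<Sum>i<n. \<bar>f i x\<bar> powr p) powr (1 / p)) \<le> ennreal (C * (\<Sum>i<n. a i powr p) powr (1 / p))"
        by (rule LIMSEQ_le_const[OF tendsto_ennrealI[OF lim]]) (use bound in auto)
      then show ?thesis by (simp add: a_def)
    qed
  qed
qed

lemma part2:
  assumes F: "phi_function F" and G: "phi_function G" and q: "0 < q"
    and H: "phi_function H" and Hc: "concave_on {0..} H"
    and Heq: "phi_equiv (G \<circ> (\<lambda>t. t powr (1 / q))) H"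
    and conv: "convex_on {0..} (phi_tilde G \<circ> phi_inv (phi_tilde F))"
  shows "q_concave (OL_space F G) (OL_norm F G) q"
proof -
  obtain c0 where c0: "0 < c0" and eq0: "\<And>t. 0 \<le> t \<Longrightarrow> G ((t / c0) powr (1 / q)) \<le> H t \<and> H t \<le> G ((c0 * t) powr (1 / q))"
    using Heq unfolding phi_equiv_def by auto
  have convP: "convex_on {0..} (Psi F G)" using conv by (simp add: Psi_def)
  define C where "C = c0 powr (2 / q)"
  have C: "0 < C" using c0 by (simp add: C_def)
  show ?thesis unfolding q_concave_def
  proof (intro exI[of _ C] conjI allI impI C)
    fix n :: nat and f :: "nat \<Rightarrow> real \<Rightarrow> real"
    assume X: "\<forall>i<n. f i \<in> OL_space F G"
    have fm: "\<And>i. i < n \<Longrightarrow> f i \<in> borel_measurable M0" using X OL_space_M0 by blast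
    have fin: "\<And>i. i < n \<Longrightarrow> OL_norm F G (f i) < \<infinity>" using X OL_space_fin by blast
    show "ennreal (1 / C * (\<Sum>i<n. enn2real (OL_norm F G (f i)) powr q) powr (1 / q))
          \<le> OL_norm F G (\<lambda>x. (\<Sum>i<n. \<bar>f i x\<bar> powr q) powr (1 / q))"
      unfolding C_def by (rule part2_core[OF F G q H Hc c0 eq0 convP fm fin])
  qed
qed

theorem theorem5p1:
  fixes F G :: "real \<Rightarrow> real" and p q :: real
  assumes "phi_function F" and "phi_function G" and "0 < p" and "0 < q"
  shows "((\<exists>H. phi_function H \<and> convex_on {0..} H \<and> phi_equiv (G \<circ> (\<lambda>t. t powr (1 / p))) H)
            \<and> concave_on {0..} (phi_tilde G \<circ> phi_inv (phi_tilde F))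
           \<longrightarrow> p_convex (OL_space F G) (OL_norm F G) p)
       \<and> ((\<exists>H. phi_function H \<and> concave_on {0..} H \<and> phi_equiv (G \<circ> (\<lambda>t. t powr (1 / q))) H)
            \<and> convex_on {0..} (phi_tilde G \<circ> phi_inv (phi_tilde F))
           \<longrightarrow> q_concave (OL_space F G) (OL_norm F G) q)"
  using part1[OF assms(1,2,3)] part2[OF assms(1,2,4)] by blast


end
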